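(* For every finite $J\subset\mathbb N_+$, the elements of $\mathcal B_J$ are $P$-cycles in $W_J$ and their classes form an $\mathbb F_2$-basis of $\mathcal M(W_J,P)\cong\mathcal M(M_J,P)$.
   Context: Over $\mathbb F_2$, $R=\Lambda(t_i:i\ge1)\otimes\Lambda(x_i:i\ge1)$ with basis the monomials $t_Ix_J$ ($t_I=\prod_{i\in I}t_i$, $x_J=\prod_{j\in J}x_j$, $t_It_K=0$ if $I\cap K\neq\emptyset$), with linear operators $Q_1(t_Ix_J)=\sum_{j\in J}t_jt_Ix_{J\setminus\{j\}}$, $P(t_Ix_J)=\sum_{K\subseteq J,|K|=2}t_Kt_Ix_{J\setminus K}$. For finite $J$, $W_J=\operatorname{span}\{t_Ix_{J\setminus I}:I\subseteq J\}$, isomorphic as a $\Lambda(Q_1,P)$-module to $M_J=\bigotimes_{j\in J}M_j$ ($M_j$ with basis $t_j,x_j$, $Q_1x_j=t_j$, $P=0$, tensor action via $\Delta(P)=P\otimes1+Q_1\otimes Q_1+1\otimes P$). Exchange: $(t_Ix_J)^e=t_Jx_I$. Sets $\mathcal B_{[n]}$: $\mathcal B_{[0]}=\{1\}$; given $\mathcal B_{[2t]}$, $\mathcal B_{[2t+1]}=\{Q_1(b\,x_{2t+1})\}\cup\{Q_1(b\,x_{2t+1})^e\}$ and $\mathcal B_{[2t+2]}=\{Q_1(b\,x_{2t+1})x_{2t+2}\}\cup\{Q_1(b\,x_{2t+1})^e\,t_{2t+2}\}$, $b\in\mathcal B_{[2t]}$. For $|J|=n$ let $\phi_J:[n]\to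 J$ be the order-preserving bijection and $(\phi_J)_*:R\to R$ the algebra map $t_i\mapsto t_{\phi_J(i)}$, $x_i\mapsto x_{\phi_J(i)}$ for $i\le n$; then $\mathcal B_J=(\phi_J)_*(\mathcal B_{[n]})$. *)

theory Defs
  imports Main
begin

text \<open>Elements of R over F_2 are represented as finite sets of basis monomials
  t_I x_J, a monomial being the pair (I, J) of finite sets of positive indices.
  Addition is symmetric difference.\<close>

type_synonym mono = "nat set \<times> nat set"
type_synonym relt = "mono set"

definition radd :: "relt \<Rightarrow> relt \<Rightarrow> relt" where
  "radd a b = (a - b) \<union> (b - a)"

definition sumF :: "('i \<Rightarrow> relt) \<Rightarrow> 'i set \<Rightarrow> relt" where
  "sumF f A = {m. odd (card {a \<in> A. m \<in> f a})}"

definition one :: relt where "one = {({}, {})}"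
definition tv :: "nat \<Rightarrow> relt" where "tv i = {({i}, {})}"
definition xv :: "nat \<Rightarrow> relt" where "xv i = {({}, {i})}"

definition mmul :: "mono \<Rightarrow> mono \<Rightarrow> relt" where
  "mmul p q = (if fst p \<inter> fst q = {} \<and> snd p \<inter> snd q = {}
               then {(fst p \<union> fst q, snd p \<union> snd q)} else {})"

definition rmul :: "relt \<Rightarrow> relt \<Rightarrow> relt" where
  "rmul a b = sumF (\<lambda>(p, q). mmul p q) (a \<times> b)"

definition Q1m :: "mono \<Rightarrow> relt" where
  "Q1m m = sumF (\<lambda>j. mmul ({j}, {}) (fst m, snd m - {j})) (snd m)"

definition Q1 :: "relt \<Rightarrow> relt" where
  "Q1 a = sumF Q1m a"

definition Pm :: "mono \<Rightarrow> relt" where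
  "Pm m = sumF (\<lambda>K. mmul (K, {}) (fst m, snd m - K)) {K. K \<subseteq> snd m \<and> card K = 2}"

definition Pop :: "relt \<Rightarrow> relt" where
  "Pop a = sumF Pm a"

definition exch :: "relt \<Rightarrow> relt" where
  "exch a = (\<lambda>(I, J). (J, I)) ` a"

text \<open>The sets B_[2t] (Beven t) and B_[2t+1] (Bodd t).\<close>
fun Beven :: "nat \<Rightarrow> relt set" where
  "Beven 0 = {one}"
| "Beven (Suc t) =
     {rmul (Q1 (rmul b (xv (2*t+1)))) (xv (2*t+2)) | b. b \<in> Beven t}
   \<union> {rmul (exch (Q1 (rmul b (xv (2*t+1))))) (tv (2*t+2)) | b. b \<in> Beven t}"

definition Bodd :: "nat \<Rightarrow> relt set" where
  "Bodd t = {Q1 (rmul b (xv (2*t+1))) | b. b \<in> Beven t}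
          \<union> {exch (Q1 (rmul b (xv (2*t+1)))) | b. b \<in> Beven t}"

definition Bn :: "nat \<Rightarrow> relt set" where
  "Bn n = (if even n then Beven (n div 2) else Bodd (n div 2))"

definition phi :: "nat set \<Rightarrow> nat \<Rightarrow> nat" where
  "phi J i = sorted_list_of_set J ! (i - 1)"

definition relabel :: "(nat \<Rightarrow> nat) \<Rightarrow> relt \<Rightarrow> relt" where
  "relabel f a = (\<lambda>(I, K). (f ` I, f ` K)) ` a"

definition BJ :: "nat set \<Rightarrow> relt set" where
  "BJ J = relabel (phi J) ` Bn (card J)"

definition WJ :: "nat set \<Rightarrow> relt set" where
  "WJ J = {a. a \<subseteq> {(I, J - I) | I. I \<subseteq> J}}"

end

theory Submission
  imports Defs
begin


lemma radd_comm: "radd a b = radd b a" unfolding radd_def by blast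
lemma radd_assoc: "radd (radd a b) c = radd a (radd b c)" unfolding radd_def by blast
lemma radd_lc: "radd a (radd b c) = radd b (radd a c)" unfolding radd_def by blast
lemmas radd_ac = radd_assoc radd_comm radd_lc
lemma radd_self[simp]: "radd a a = {}" unfolding radd_def by blast
lemma radd_self2[simp]: "radd a (radd a b) = b" unfolding radd_def by blast
lemma radd_e1[simp]: "radd a {} = a" unfolding radd_def by blast
lemma radd_e2[simp]: "radd {} a = a" unfolding radd_def by blast
lemma radd_eq_iff: "radd a b = c \<longleftrightarrow> b = radd a c" unfolding radd_def by blast
lemma radd_eq0: "radd a b = {} \<longleftrightarrow> a = b" unfolding radd_def by blast

lemma sumF_mem: "m \<in> sumF f A \<longleftrightarrow> odd (card {a \<in> A. m \<in> f a})"
  by (simp add: sumF_def)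

lemma sumF_empty[simp]: "sumF f {} = {}" unfolding sumF_def by simp

lemma sumF_insert: assumes "finite A" "x \<notin> A"
  shows "sumF f (insert x A) = radd (f x) (sumF f A)"
proof (rule set_eqI)
  fix m
  have "{a \<in> insert x A. m \<in> f a} = (if m \<in> f x then insert x {a \<in> A. m \<in> f a} else {a \<in> A. m \<in> f a})"
    by auto
  then show "m \<in> sumF f (insert x A) \<longleftrightarrow> m \<in> radd (f x) (sumF f A)"
    using assms unfolding sumF_def radd_def by (auto simp: card_insert_if)
qed

lemma sumF_single[simp]: "sumF f {x} = f x"
  using sumF_insert[of "{}" x f] by simp

lemma sumF_cong: "(\<And>x. x \<in> A \<Longrightarrow> f x = g x) \<Longrightarrow> sumF f A = sumF g A"
  unfolding sumF_def by (simp cong: conj_cong)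

lemma sumF_union: assumes "finite A" "finite B" "A \<inter> B = {}"
  shows "sumF f (A \<union> B) = radd (sumF f A) (sumF f B)"
  using assms
proof (induction A rule: finite_induct)
  case empty then show ?case by simp
next
  case (insert x F)
  then have "sumF f (insert x F \<union> B) = radd (f x) (sumF f (F \<union> B))"
    by (simp add: sumF_insert)
  with insert show ?case by (simp add: sumF_insert radd_assoc)
qed

lemma sumF_image: assumes "inj_on h A" shows "sumF f (h ` A) = sumF (\<lambda>x. f (h x)) A"
proof -
  have "\<And>m. {a \<in> h ` A. m \<in> f a} = h ` {a \<in> A. m \<in> f (h a)}" by auto
  moreover have "\<And>m. card (h ` {a \<in> A. m \<in> f (h a)}) = card {a \<in> A. m \<in> f (h a)}"
    by (rule card_image, rule inj_on_subset[OF assms]) auto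
  ultimately show ?thesis unfolding sumF_def by simp
qed

lemma sumF_radd_fun: assumes "finite A"
  shows "sumF (\<lambda>x. radd (f x) (g x)) A = radd (sumF f A) (sumF g A)"
  using assms
proof (induction A rule: finite_induct)
  case (insert x F)
  have "sumF (\<lambda>x. radd (f x) (g x)) (insert x F) = radd (radd (f x) (g x)) (sumF (\<lambda>x. radd (f x) (g x)) F)"
    using insert(1,2) by (rule sumF_insert)
  also have "\<dots> = radd (radd (f x) (g x)) (radd (sumF f F) (sumF g F))" using insert(3) by simp
  also have "\<dots> = radd (radd (f x) (sumF f F)) (radd (g x) (sumF g F))" unfolding radd_def by blast
  finally show ?case using insert(1,2) by (simp add: sumF_insert)
qed simp

lemma sumF_zero: assumes "\<And>x. x \<in> A \<Longrightarrow> f x = {}" shows "sumF f A = {}"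
proof (rule set_eqI)
  fix m
  have "{a \<in> A. m \<in> f a} = {}" using assms by auto
  then show "m \<in> sumF f A \<longleftrightarrow> m \<in> {}" by (simp only: sumF_mem card.empty) simp
qed

lemma sumF_subset: "sumF f A \<subseteq> \<Union> (f ` A)"
proof
  fix m assume "m \<in> sumF f A"
  then have "card {a \<in> A. m \<in> f a} \<noteq> 0" by (simp only: sumF_mem) presburger
  then have "{a \<in> A. m \<in> f a} \<noteq> {}" by (metis card.empty)
  then show "m \<in> \<Union> (f ` A)" by blast
qed

lemma sumF_img: assumes "\<And>x. x \<in> A \<Longrightarrow> f x \<subseteq> D" "inj_on \<phi> D"
  shows "sumF (\<lambda>x. \<phi> ` f x) A = \<phi> ` sumF f A"
proof (rule set_eqI)
  fix m
  show "m \<in> sumF (\<lambda>x. \<phi> ` f x) A \<longleftrightarrow> m \<in> \<phi> ` sumF f A"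
  proof (cases "m \<in> \<phi> ` D")
    case True
    then obtain m0 where m0: "m0 \<in> D" "m = \<phi> m0" by auto
    have "\<And>a. a \<in> A \<Longrightarrow> m \<in> \<phi> ` f a \<longleftrightarrow> m0 \<in> f a"
      using assms m0 by (auto dest: inj_onD)
    then have e: "{a \<in> A. m \<in> \<phi> ` f a} = {a \<in> A. m0 \<in> f a}" by auto
    have "m \<in> \<phi> ` sumF f A \<longleftrightarrow> m0 \<in> sumF f A"
      using sumF_subset[of f A] assms m0 by (auto dest: inj_onD)
    then show ?thesis using e unfolding sumF_def by simp
  next
    case False
    then have "{a \<in> A. m \<in> \<phi> ` f a} = {}" using assms by auto
    moreover have "m \<notin> \<phi> ` sumF f A" using False sumF_subset[of f A] assms by auto
    ultimately show ?thesis by (simp only: sumF_mem card.empty) simp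
  qed
qed

lemma sumF_singl_img: assumes "inj_on \<phi> A" shows "sumF (\<lambda>x. {\<phi> x}) A = \<phi> ` A"
proof -
  have "\<And>m. {a \<in> A. m \<in> {\<phi> a}} = {a \<in> A. \<phi> a = m}" by auto
  moreover have "\<And>m. card {a \<in> A. \<phi> a = m} = (if m \<in> \<phi> ` A then 1 else 0)"
  proof -
    fix m show "card {a \<in> A. \<phi> a = m} = (if m \<in> \<phi> ` A then 1 else 0)"
    proof (cases "m \<in> \<phi> ` A")
      case True then obtain a where "a \<in> A" "m = \<phi> a" by auto
      then have "{a \<in> A. \<phi> a = m} = {a}" using assms by (auto dest: inj_onD)
      then show ?thesis using True by simp
    next
      case False
      then have "{a \<in> A. \<phi> a = m} = {}" by auto
      then show ?thesis using False by (simp only: card.empty) simp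
    qed
  qed
  ultimately show ?thesis unfolding sumF_def by auto
qed

lemma sumF_lin_radd: assumes "finite a" "finite b"
  shows "sumF g (radd a b) = radd (sumF g a) (sumF g b)"
proof -
  have 1: "radd a b = (a - b) \<union> (b - a)" unfolding radd_def by blast
  have e1: "(a - b) \<union> (a \<inter> b) = a" and e2: "(b - a) \<union> (a \<inter> b) = b" by blast+
  have "sumF g ((a - b) \<union> (a \<inter> b)) = radd (sumF g (a - b)) (sumF g (a \<inter> b))"
    using assms by (intro sumF_union) auto
  then have "sumF g a = radd (sumF g (a - b)) (sumF g (a \<inter> b))" by (simp only: e1)
  moreover have "sumF g ((b - a) \<union> (a \<inter> b)) = radd (sumF g (b - a)) (sumF g (a \<inter> b))"
    using assms by (intro sumF_union) auto
  then have "sumF g b = radd (sumF g (b - a)) (sumF g (a \<inter> b))" by (simp only: e2)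
  moreover have "sumF g (radd a b) = radd (sumF g (a - b)) (sumF g (b - a))"
    unfolding 1 using assms by (intro sumF_union) auto
  ultimately show ?thesis by (simp add: radd_ac)
qed

lemma image_radd: "inj_on \<phi> (a \<union> b) \<Longrightarrow> \<phi> ` radd a b = radd (\<phi> ` a) (\<phi> ` b)"
  unfolding radd_def by (auto dest: inj_onD)



definition Mn :: "nat \<Rightarrow> mono set" where
  "Mn n = {(I, {1..n} - I) | I. I \<subseteq> {1..n}}"
definition Wn :: "nat \<Rightarrow> relt set" where "Wn n = WJ {1..n}"

lemma Wn_iff: "a \<in> Wn n \<longleftrightarrow> a \<subseteq> Mn n" unfolding Wn_def WJ_def Mn_def by (rule mem_Collect_eq)

lemma Mn_finite: "finite (Mn n)"
proof -
  have "Mn n = (\<lambda>I. (I, {1..n} - I)) ` Pow {1..n}" unfolding Mn_def by auto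
  then show ?thesis by simp
qed

lemma Wn_finite: "a \<in> Wn n \<Longrightarrow> finite a"
  unfolding Wn_iff using Mn_finite by (rule finite_subset[rotated])

lemma Mn_mem: "m \<in> Mn n \<longleftrightarrow> fst m \<subseteq> {1..n} \<and> snd m = {1..n} - fst m"
  unfolding Mn_def by (cases m) auto

lemma mmul_K: "mmul (K, {}) (I, J) = (if K \<inter> I = {} then {(K \<union> I, J)} else {})"
  unfolding mmul_def by simp

lemma Q1m_sub: "Q1m m \<subseteq> {m'. \<exists>j \<in> snd m. m' = (insert j (fst m), snd m - {j}) \<and> j \<notin> fst m}"
proof -
  have "Q1m m \<subseteq> \<Union> ((\<lambda>j. mmul ({j}, {}) (fst m, snd m - {j})) ` snd m)"
    unfolding Q1m_def by (rule sumF_subset)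
  also have "\<dots> \<subseteq> {m'. \<exists>j \<in> snd m. m' = (insert j (fst m), snd m - {j}) \<and> j \<notin> fst m}"
    by (auto simp: mmul_K split: if_splits)
  finally show ?thesis .
qed

lemma Pm_sub: "Pm m \<subseteq> {m'. \<exists>K. K \<subseteq> snd m \<and> K \<inter> fst m = {} \<and> m' = (K \<union> fst m, snd m - K)}"
proof -
  have "Pm m \<subseteq> \<Union> ((\<lambda>K. mmul (K, {}) (fst m, snd m - K)) ` {K. K \<subseteq> snd m \<and> card K = 2})"
    unfolding Pm_def by (rule sumF_subset)
  also have "\<dots> \<subseteq> {m'. \<exists>K. K \<subseteq> snd m \<and> K \<inter> fst m = {} \<and> m' = (K \<union> fst m, snd m - K)}"
    by (auto simp: mmul_K split: if_splits)
  finally show ?thesis .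
qed

lemma Mn_pair: "(I, J) \<in> Mn n \<longleftrightarrow> I \<subseteq> {1..n} \<and> J = {1..n} - I"
  by (simp add: Mn_mem)

lemma Q1m_Mn: assumes "m \<in> Mn n" shows "Q1m m \<subseteq> Mn n"
proof
  fix m' assume "m' \<in> Q1m m"
  then obtain j where j: "j \<in> snd m" "m' = (insert j (fst m), snd m - {j})" "j \<notin> fst m"
    using Q1m_sub[of m] by blast
  have "fst m \<subseteq> {1..n}" "snd m = {1..n} - fst m" using assms by (simp_all add: Mn_mem)
  then show "m' \<in> Mn n" unfolding j(2) Mn_pair using j(1) by blast
qed

lemma Pm_Mn: assumes "m \<in> Mn n" shows "Pm m \<subseteq> Mn n"
proof
  fix m' assume "m' \<in> Pm m"
  then obtain K where K: "K \<subseteq> snd m" "K \<inter> fst m = {}" "m' = (K \<union> fst m, snd m - K)"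
    using Pm_sub[of m] by blast
  have "fst m \<subseteq> {1..n}" "snd m = {1..n} - fst m" using assms by (simp_all add: Mn_mem)
  then show "m' \<in> Mn n" unfolding K(3) Mn_pair using K(1) by blast
qed

lemma Q1_W[simp]: "a \<in> Wn n \<Longrightarrow> Q1 a \<in> Wn n"
  unfolding Q1_def Wn_iff using sumF_subset[of Q1m a] Q1m_Mn by blast
lemma Pop_W[simp]: "a \<in> Wn n \<Longrightarrow> Pop a \<in> Wn n"
  unfolding Pop_def Wn_iff using sumF_subset[of Pm a] Pm_Mn by blast
lemma exch_W[simp]: assumes "a \<in> Wn n" shows "exch a \<in> Wn n"
  unfolding Wn_iff
proof
  fix m assume "m \<in> exch a"
  then obtain I J where m: "(I, J) \<in> a" "m = (J, I)" unfolding exch_def by auto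
  have "(I, J) \<in> Mn n" using assms m(1) by (auto simp: Wn_iff)
  then have "I \<subseteq> {1..n}" "J = {1..n} - I" by (simp_all add: Mn_pair)
  then show "m \<in> Mn n" unfolding m(2) Mn_pair by blast
qed
lemma radd_W[simp]: "a \<in> Wn n \<Longrightarrow> b \<in> Wn n \<Longrightarrow> radd a b \<in> Wn n"
  unfolding Wn_iff radd_def by blast
lemma empty_W[simp]: "{} \<in> Wn n" unfolding Wn_iff by simp
lemma sumF_W: "(\<And>x. x \<in> S \<Longrightarrow> f x \<in> Wn n) \<Longrightarrow> sumF f S \<in> Wn n"
  unfolding Wn_iff using sumF_subset[of f S] by blast

lemma Q1_empty[simp]: "Q1 {} = {}" unfolding Q1_def by simp
lemma Pop_empty[simp]: "Pop {} = {}" unfolding Pop_def by simp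
lemma exch_empty[simp]: "exch {} = {}" unfolding exch_def by simp
lemma exch_def2: "exch a = (\<lambda>(I, J). (J, I)) ` a" by (rule exch_def)
lemma exch_exch[simp]: "exch (exch a) = a"
proof -
  have "(\<lambda>x. case (case x of (I, J) \<Rightarrow> (J, I)) of (I, J) \<Rightarrow> (J, I)) = (\<lambda>x::mono. x)" by auto
  then show ?thesis unfolding exch_def image_image by (simp only: image_ident)
qed
lemma exch_radd: "exch (radd a b) = radd (exch a) (exch b)"
  unfolding exch_def by (rule image_radd) (auto simp: inj_on_def)
lemma exch_inj: "exch a = exch b \<Longrightarrow> a = b" by (metis exch_exch)

lemma Q1_radd: "finite a \<Longrightarrow> finite b \<Longrightarrow> Q1 (radd a b) = radd (Q1 a) (Q1 b)"
  unfolding Q1_def by (rule sumF_lin_radd)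
lemma Pop_radd: "finite a \<Longrightarrow> finite b \<Longrightarrow> Pop (radd a b) = radd (Pop a) (Pop b)"
  unfolding Pop_def by (rule sumF_lin_radd)

lemma Q1_Wr: "a \<in> Wn n \<Longrightarrow> b \<in> Wn n \<Longrightarrow> Q1 (radd a b) = radd (Q1 a) (Q1 b)"
  by (simp add: Q1_radd Wn_finite)
lemma Pop_Wr: "a \<in> Wn n \<Longrightarrow> b \<in> Wn n \<Longrightarrow> Pop (radd a b) = radd (Pop a) (Pop b)"
  by (simp add: Pop_radd Wn_finite)

definition Xm :: "nat \<Rightarrow> mono \<Rightarrow> mono" where "Xm k m = (fst m, insert k (snd m))"
definition Tm :: "nat \<Rightarrow> mono \<Rightarrow> mono" where "Tm k m = (insert k (fst m), snd m)"

lemma Xm_inj: "inj_on (Xm k) {m. k \<notin> snd m}"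
  unfolding Xm_def inj_on_def by (auto simp: prod_eq_iff)
lemma Tm_inj: "inj_on (Tm k) {m. k \<notin> fst m}"
  unfolding Tm_def inj_on_def by (auto simp: prod_eq_iff)

lemma mmul_X: "k \<notin> K \<Longrightarrow> mmul (K, {}) (I, insert k J) = Xm k ` mmul (K, {}) (I, J)"
  by (simp add: mmul_K Xm_def)
lemma mmul_T: "k \<notin> K \<Longrightarrow> mmul (K, {}) (insert k I, J) = Tm k ` mmul (K, {}) (I, J)"
  by (auto simp: mmul_K Tm_def)

lemma Q1m_X: assumes "finite (snd m)" "k \<notin> fst m" "k \<notin> snd m"
  shows "Q1m (Xm k m) = radd (Xm k ` Q1m m) {Tm k m}"
proof -
  obtain I J where m: "m = (I, J)" by (cases m)
  have fJ: "finite J" "k \<notin> I" "k \<notin> J" using assms m by auto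
  have "Q1m (Xm k m) = sumF (\<lambda>j. mmul ({j}, {}) (I, insert k J - {j})) (insert k J)"
    by (simp add: Q1m_def Xm_def m)
  also have "\<dots> = radd (mmul ({k}, {}) (I, insert k J - {k})) (sumF (\<lambda>j. mmul ({j}, {}) (I, insert k J - {j})) J)"
    using fJ by (simp add: sumF_insert)
  also have "mmul ({k}, {}) (I, insert k J - {k}) = {Tm k m}"
    using fJ by (simp add: mmul_K Tm_def m)
  also have "sumF (\<lambda>j. mmul ({j}, {}) (I, insert k J - {j})) J = sumF (\<lambda>j. Xm k ` mmul ({j}, {}) (I, J - {j})) J"
  proof (rule sumF_cong)
    fix j assume "j \<in> J"
    then have "insert k J - {j} = insert k (J - {j})" "k \<notin> {j}" using fJ by auto
    then show "mmul ({j}, {}) (I, insert k J - {j}) = Xm k ` mmul ({j}, {}) (I, J - {j})"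
      by (simp add: mmul_X)
  qed
  also have "\<dots> = Xm k ` sumF (\<lambda>j. mmul ({j}, {}) (I, J - {j})) J"
    by (rule sumF_img[OF _ Xm_inj]) (auto simp: mmul_K fJ split: if_splits)
  also have "sumF (\<lambda>j. mmul ({j}, {}) (I, J - {j})) J = Q1m m" by (simp add: Q1m_def m)
  finally show ?thesis by (simp add: radd_comm)
qed

lemma Q1m_T: assumes "k \<notin> fst m" "k \<notin> snd m"
  shows "Q1m (Tm k m) = Tm k ` Q1m m"
proof -
  obtain I J where m: "m = (I, J)" by (cases m)
  have fJ: "k \<notin> I" "k \<notin> J" using assms m by auto
  have "Q1m (Tm k m) = sumF (\<lambda>j. mmul ({j}, {}) (insert k I, J - {j})) J"
    by (simp add: Q1m_def Tm_def m)
  also have "\<dots> = sumF (\<lambda>j. Tm k ` mmul ({j}, {}) (I, J - {j})) J"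
  proof (rule sumF_cong)
    fix j assume "j \<in> J"
    then have "k \<notin> {j}" using fJ by auto
    then show "mmul ({j}, {}) (insert k I, J - {j}) = Tm k ` mmul ({j}, {}) (I, J - {j})"
      by (simp add: mmul_T)
  qed
  also have "\<dots> = Tm k ` sumF (\<lambda>j. mmul ({j}, {}) (I, J - {j})) J"
    by (rule sumF_img[OF _ Tm_inj]) (auto simp: mmul_K fJ split: if_splits)
  finally show ?thesis by (simp add: Q1m_def m)
qed

lemma Pm_T: assumes "k \<notin> fst m" "k \<notin> snd m"
  shows "Pm (Tm k m) = Tm k ` Pm m"
proof -
  obtain I J where m: "m = (I, J)" by (cases m)
  have fJ: "k \<notin> I" "k \<notin> J" using assms m by auto
  have "Pm (Tm k m) = sumF (\<lambda>K. mmul (K, {}) (insert k I, J - K)) {K. K \<subseteq> J \<and> card K = 2}"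
    by (simp add: Pm_def Tm_def m)
  also have "\<dots> = sumF (\<lambda>K. Tm k ` mmul (K, {}) (I, J - K)) {K. K \<subseteq> J \<and> card K = 2}"
  proof (rule sumF_cong)
    fix K assume "K \<in> {K. K \<subseteq> J \<and> card K = 2}"
    then have "k \<notin> K" using fJ by auto
    then show "mmul (K, {}) (insert k I, J - K) = Tm k ` mmul (K, {}) (I, J - K)"
      by (simp add: mmul_T)
  qed
  also have "\<dots> = Tm k ` sumF (\<lambda>K. mmul (K, {}) (I, J - K)) {K. K \<subseteq> J \<and> card K = 2}"
    by (rule sumF_img[OF _ Tm_inj]) (auto simp: mmul_K fJ split: if_splits)
  finally show ?thesis by (simp add: Pm_def m)
qed

lemma Kset_insert: assumes "k \<notin> J"
  shows "{K. K \<subseteq> insert k J \<and> card K = 2} = {K. K \<subseteq> J \<and> card K = 2} \<union> (\<lambda>j. {k, j}) ` J"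
proof (rule set_eqI, rule iffI)
  fix K assume "K \<in> {K. K \<subseteq> insert k J \<and> card K = 2}"
  then have K: "K \<subseteq> insert k J" "card K = 2" by auto
  then obtain x y where xy: "x \<noteq> y" "K = {x, y}" by (meson card_2_iff)
  show "K \<in> {K. K \<subseteq> J \<and> card K = 2} \<union> (\<lambda>j. {k, j}) ` J"
  proof (cases "k \<in> K")
    case True
    then have "x = k \<or> y = k" using xy by auto
    then show ?thesis using xy K by (auto simp: insert_commute)
  next
    case False then show ?thesis using K by auto
  qed
next
  fix K assume "K \<in> {K. K \<subseteq> J \<and> card K = 2} \<union> (\<lambda>j. {k, j}) ` J"
  then show "K \<in> {K. K \<subseteq> insert k J \<and> card K = 2}" using assms by (auto simp: card_insert_if)
qed

lemma Pm_X: assumes "finite (snd m)" "k \<notin> fst m" "k \<notin> snd m"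
  shows "Pm (Xm k m) = radd (Xm k ` Pm m) (Tm k ` Q1m m)"
proof -
  obtain I J where m: "m = (I, J)" by (cases m)
  have fJ: "finite J" "k \<notin> I" "k \<notin> J" using assms m by auto
  define A where "A = {K. K \<subseteq> J \<and> card K = 2}"
  have fA: "finite A" unfolding A_def using fJ(1) by (rule rev_finite_subset[OF finite_Pow_iff[THEN iffD2]]) auto
  have dis: "A \<inter> (\<lambda>j. {k, j}) ` J = {}" unfolding A_def using fJ by auto
  have inj: "inj_on (\<lambda>j. {k, j}) J" using fJ by (auto simp: inj_on_def doubleton_eq_iff)
  have "Pm (Xm k m) = sumF (\<lambda>K. mmul (K, {}) (I, insert k J - K)) (A \<union> (\<lambda>j. {k, j}) ` J)"
    by (simp add: Pm_def Xm_def m Kset_insert[OF fJ(3)] A_def)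
  also have "\<dots> = radd (sumF (\<lambda>K. mmul (K, {}) (I, insert k J - K)) A)
                        (sumF (\<lambda>j. mmul ({k, j}, {}) (I, insert k J - {k, j})) J)"
    using fA fJ dis by (simp add: sumF_union sumF_image[OF inj])
  also have "sumF (\<lambda>K. mmul (K, {}) (I, insert k J - K)) A = sumF (\<lambda>K. Xm k ` mmul (K, {}) (I, J - K)) A"
  proof (rule sumF_cong)
    fix K assume "K \<in> A"
    then have "k \<notin> K" "insert k J - K = insert k (J - K)" using fJ by (auto simp: A_def)
    then show "mmul (K, {}) (I, insert k J - K) = Xm k ` mmul (K, {}) (I, J - K)"
      by (simp add: mmul_X)
  qed
  also have "\<dots> = Xm k ` Pm m"
    unfolding Pm_def m A_def using fJ
    by (simp, intro sumF_img[OF _ Xm_inj]) (auto simp: mmul_K split: if_splits)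
  also have "sumF (\<lambda>j. mmul ({k, j}, {}) (I, insert k J - {k, j})) J = sumF (\<lambda>j. Tm k ` mmul ({j}, {}) (I, J - {j})) J"
  proof (rule sumF_cong)
    fix j assume "j \<in> J"
    then have "insert k J - {k, j} = J - {j}" "k \<noteq> j" using fJ by auto
    then show "mmul ({k, j}, {}) (I, insert k J - {k, j}) = Tm k ` mmul ({j}, {}) (I, J - {j})"
      using fJ by (auto simp: mmul_K Tm_def)
  qed
  also have "\<dots> = Tm k ` Q1m m"
    unfolding Q1m_def m using fJ
    by (simp, intro sumF_img[OF _ Tm_inj]) (auto simp: mmul_K split: if_splits)
  finally show ?thesis .
qed



definition av :: "nat \<Rightarrow> relt \<Rightarrow> bool" where
  "av k a = (\<forall>m\<in>a. k \<notin> fst m \<and> k \<notin> snd m \<and> finite (snd m))"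

lemma Q1_X: assumes "finite a" "av k a"
  shows "Q1 (Xm k ` a) = radd (Xm k ` Q1 a) (Tm k ` a)"
proof -
  have ia: "inj_on (Xm k) a"
    by (rule inj_on_subset[OF Xm_inj]) (use assms(2) in \<open>auto simp: av_def\<close>)
  have "Q1 (Xm k ` a) = sumF (\<lambda>m. Q1m (Xm k m)) a" unfolding Q1_def by (rule sumF_image[OF ia])
  also have "\<dots> = sumF (\<lambda>m. radd (Xm k ` Q1m m) {Tm k m}) a"
    by (rule sumF_cong, rule Q1m_X) (use assms(2) in \<open>auto simp: av_def\<close>)
  also have "\<dots> = radd (sumF (\<lambda>m. Xm k ` Q1m m) a) (sumF (\<lambda>m. {Tm k m}) a)"
    using assms(1) by (rule sumF_radd_fun)
  also have "sumF (\<lambda>m. Xm k ` Q1m m) a = Xm k ` Q1 a" unfolding Q1_def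
    by (rule sumF_img[OF _ Xm_inj]) (use Q1m_sub assms(2) in \<open>fastforce simp: av_def\<close>)
  also have "sumF (\<lambda>m. {Tm k m}) a = Tm k ` a"
    by (rule sumF_singl_img, rule inj_on_subset[OF Tm_inj]) (use assms(2) in \<open>auto simp: av_def\<close>)
  finally show ?thesis .
qed

lemma Q1_T: assumes "av k a"
  shows "Q1 (Tm k ` a) = Tm k ` Q1 a"
proof -
  have ia: "inj_on (Tm k) a"
    by (rule inj_on_subset[OF Tm_inj]) (use assms in \<open>auto simp: av_def\<close>)
  have "Q1 (Tm k ` a) = sumF (\<lambda>m. Q1m (Tm k m)) a" unfolding Q1_def by (rule sumF_image[OF ia])
  also have "\<dots> = sumF (\<lambda>m. Tm k ` Q1m m) a"
    by (rule sumF_cong, rule Q1m_T) (use assms in \<open>auto simp: av_def\<close>)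
  also have "\<dots> = Tm k ` Q1 a" unfolding Q1_def
    by (rule sumF_img[OF _ Tm_inj]) (use Q1m_sub assms in \<open>fastforce simp: av_def\<close>)
  finally show ?thesis .
qed

lemma Pop_X: assumes "finite a" "av k a"
  shows "Pop (Xm k ` a) = radd (Xm k ` Pop a) (Tm k ` Q1 a)"
proof -
  have ia: "inj_on (Xm k) a"
    by (rule inj_on_subset[OF Xm_inj]) (use assms(2) in \<open>auto simp: av_def\<close>)
  have "Pop (Xm k ` a) = sumF (\<lambda>m. Pm (Xm k m)) a" unfolding Pop_def by (rule sumF_image[OF ia])
  also have "\<dots> = sumF (\<lambda>m. radd (Xm k ` Pm m) (Tm k ` Q1m m)) a"
    by (rule sumF_cong, rule Pm_X) (use assms(2) in \<open>auto simp: av_def\<close>)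
  also have "\<dots> = radd (sumF (\<lambda>m. Xm k ` Pm m) a) (sumF (\<lambda>m. Tm k ` Q1m m) a)"
    using assms(1) by (rule sumF_radd_fun)
  also have "sumF (\<lambda>m. Xm k ` Pm m) a = Xm k ` Pop a" unfolding Pop_def
    by (rule sumF_img[OF _ Xm_inj]) (use Pm_sub assms(2) in \<open>fastforce simp: av_def\<close>)
  also have "sumF (\<lambda>m. Tm k ` Q1m m) a = Tm k ` Q1 a" unfolding Q1_def
    by (rule sumF_img[OF _ Tm_inj]) (use Q1m_sub assms(2) in \<open>fastforce simp: av_def\<close>)
  finally show ?thesis .
qed

lemma Pop_T: assumes "av k a"
  shows "Pop (Tm k ` a) = Tm k ` Pop a"
proof -
  have ia: "inj_on (Tm k) a"
    by (rule inj_on_subset[OF Tm_inj]) (use assms in \<open>auto simp: av_def\<close>)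
  have "Pop (Tm k ` a) = sumF (\<lambda>m. Pm (Tm k m)) a" unfolding Pop_def by (rule sumF_image[OF ia])
  also have "\<dots> = sumF (\<lambda>m. Tm k ` Pm m) a"
    by (rule sumF_cong, rule Pm_T) (use assms in \<open>auto simp: av_def\<close>)
  also have "\<dots> = Tm k ` Pop a" unfolding Pop_def
    by (rule sumF_img[OF _ Tm_inj]) (use Pm_sub assms in \<open>fastforce simp: av_def\<close>)
  finally show ?thesis .
qed

lemma exch_X: "exch (Xm k ` a) = Tm k ` exch a"
proof -
  have "\<And>m. (case Xm k m of (I, J) \<Rightarrow> (J, I)) = Tm k (case m of (I, J) \<Rightarrow> (J, I))"
    by (case_tac m) (simp add: Xm_def Tm_def)
  then show ?thesis unfolding exch_def image_image by simp
qed

lemma exch_T: "exch (Tm k ` a) = Xm k ` exch a"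
proof -
  have "\<And>m. (case Tm k m of (I, J) \<Rightarrow> (J, I)) = Xm k (case m of (I, J) \<Rightarrow> (J, I))"
    by (case_tac m) (simp add: Xm_def Tm_def)
  then show ?thesis unfolding exch_def image_image by simp
qed

definition mk :: "nat \<Rightarrow> relt \<Rightarrow> relt \<Rightarrow> relt" where
  "mk n a b = radd (Xm (Suc n) ` a) (Tm (Suc n) ` b)"

lemma Mn_avoid: "m \<in> Mn n \<Longrightarrow> Suc n \<notin> fst m \<and> Suc n \<notin> snd m \<and> finite (snd m)"
  by (cases m) (auto simp: Mn_pair)

lemma av_W: assumes "a \<in> Wn n" shows "av (Suc n) a"
  unfolding av_def
proof
  fix m assume "m \<in> a"
  then have "m \<in> Mn n" using assms by (auto simp: Wn_iff)
  then show "Suc n \<notin> fst m \<and> Suc n \<notin> snd m \<and> finite (snd m)" by (rule Mn_avoid)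
qed

lemma Union_Wn: "\<Union>(Wn n) = Mn n" by (auto simp: Wn_iff)

lemma Xm_injW: "inj_on (Xm (Suc n)) (\<Union>(Wn n))"
  unfolding Union_Wn by (rule inj_on_subset[OF Xm_inj]) (auto dest: Mn_avoid)
lemma Tm_injW: "inj_on (Tm (Suc n)) (\<Union>(Wn n))"
  unfolding Union_Wn by (rule inj_on_subset[OF Tm_inj]) (auto dest: Mn_avoid)

lemma Xm_radd: "a \<in> Wn n \<Longrightarrow> b \<in> Wn n \<Longrightarrow> Xm (Suc n) ` radd a b = radd (Xm (Suc n) ` a) (Xm (Suc n) ` b)"
  by (rule image_radd, rule inj_on_subset[OF Xm_injW]) auto
lemma Tm_radd: "a \<in> Wn n \<Longrightarrow> b \<in> Wn n \<Longrightarrow> Tm (Suc n) ` radd a b = radd (Tm (Suc n) ` a) (Tm (Suc n) ` b)"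
  by (rule image_radd, rule inj_on_subset[OF Tm_injW]) auto

lemma mk_radd: "a \<in> Wn n \<Longrightarrow> b \<in> Wn n \<Longrightarrow> c \<in> Wn n \<Longrightarrow> d \<in> Wn n \<Longrightarrow>
  radd (mk n a b) (mk n c d) = mk n (radd a c) (radd b d)"
  unfolding mk_def by (simp add: Xm_radd Tm_radd radd_ac)

lemma mk_empty[simp]: "mk n {} {} = {}" unfolding mk_def by simp

lemma ival_Suc: "{1..Suc n} = insert (Suc n) {1..n}" by auto

lemma Xm_Mn: assumes "m \<in> Mn n" shows "Xm (Suc n) m \<in> Mn (Suc n)"
proof -
  obtain I where I: "I \<subseteq> {1..n}" "m = (I, {1..n} - I)" using assms by (auto simp: Mn_def)
  have "Suc n \<notin> I" using I by auto
  then have "I \<subseteq> {1..Suc n}" "insert (Suc n) ({1..n} - I) = {1..Suc n} - I"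
    using I unfolding ival_Suc by blast+
  then show ?thesis unfolding I(2) Xm_def Mn_pair by simp
qed
lemma Tm_Mn: assumes "m \<in> Mn n" shows "Tm (Suc n) m \<in> Mn (Suc n)"
proof -
  obtain I where I: "I \<subseteq> {1..n}" "m = (I, {1..n} - I)" using assms by (auto simp: Mn_def)
  have "Suc n \<notin> I" using I by auto
  then have "insert (Suc n) I \<subseteq> {1..Suc n}" "{1..n} - I = {1..Suc n} - insert (Suc n) I"
    using I unfolding ival_Suc by auto
  then show ?thesis unfolding I(2) Tm_def Mn_pair by simp
qed

lemma mk_W[simp]: assumes "a \<in> Wn n" "b \<in> Wn n" shows "mk n a b \<in> Wn (Suc n)"
proof -
  have "Xm (Suc n) ` a \<in> Wn (Suc n)" "Tm (Suc n) ` b \<in> Wn (Suc n)"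
    using assms Xm_Mn Tm_Mn by (auto simp: Wn_iff)
  then show ?thesis unfolding mk_def by simp
qed

lemma XT_disj: "k \<notin> fst m \<Longrightarrow> Xm k m \<noteq> Tm k m'"
  by (auto simp: Xm_def Tm_def)

lemma mk_memX: assumes "a \<in> Wn n" "b \<in> Wn n" "m \<in> Mn n"
  shows "Xm (Suc n) m \<in> mk n a b \<longleftrightarrow> m \<in> a"
proof -
  have "Suc n \<notin> fst m" using Mn_avoid[OF assms(3)] by blast
  then have "Xm (Suc n) m \<notin> Tm (Suc n) ` b" using XT_disj[where k="Suc n" and m=m] by blast
  moreover have "Xm (Suc n) m \<in> Xm (Suc n) ` a \<longleftrightarrow> m \<in> a"
  proof
    assume "Xm (Suc n) m \<in> Xm (Suc n) ` a"
    then obtain m' where "m' \<in> a" "Xm (Suc n) m = Xm (Suc n) m'" by blast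
    moreover have "m' \<in> \<Union>(Wn n)" using assms(1) \<open>m' \<in> a\<close> unfolding Union_Wn Wn_iff by blast
    moreover have "m \<in> \<Union>(Wn n)" unfolding Union_Wn by (rule assms(3))
    ultimately have "m = m'" using inj_onD[OF Xm_injW, where x=m and y=m'] by blast
    then show "m \<in> a" using \<open>m' \<in> a\<close> by simp
  qed auto
  ultimately show ?thesis unfolding mk_def radd_def by blast
qed

lemma mk_memT: assumes "a \<in> Wn n" "b \<in> Wn n" "m \<in> Mn n"
  shows "Tm (Suc n) m \<in> mk n a b \<longleftrightarrow> m \<in> b"
proof -
  have "\<And>m'. m' \<in> a \<Longrightarrow> Suc n \<notin> fst m'"
  proof -
    fix m' assume "m' \<in> a"
    then have "m' \<in> Mn n" using assms(1) unfolding Wn_iff by blast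
    then show "Suc n \<notin> fst m'" using Mn_avoid by blast
  qed
  note H = this
  have "Tm (Suc n) m \<notin> Xm (Suc n) ` a"
  proof
    assume "Tm (Suc n) m \<in> Xm (Suc n) ` a"
    then obtain m' where "m' \<in> a" "Tm (Suc n) m = Xm (Suc n) m'" by blast
    then show False using H[of m'] XT_disj[where k="Suc n" and m=m' and m'=m] by simp
  qed
  moreover have "Tm (Suc n) m \<in> Tm (Suc n) ` b \<longleftrightarrow> m \<in> b"
  proof
    assume "Tm (Suc n) m \<in> Tm (Suc n) ` b"
    then obtain m' where "m' \<in> b" "Tm (Suc n) m = Tm (Suc n) m'" by blast
    moreover have "m' \<in> \<Union>(Wn n)" using assms(2) \<open>m' \<in> b\<close> unfolding Union_Wn Wn_iff by blast
    moreover have "m \<in> \<Union>(Wn n)" unfolding Union_Wn by (rule assms(3))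
    ultimately have "m = m'" using inj_onD[OF Tm_injW, where x=m and y=m'] by blast
    then show "m \<in> b" using \<open>m' \<in> b\<close> by simp
  qed auto
  ultimately show ?thesis unfolding mk_def radd_def by blast
qed

lemma mk_inj: assumes "a \<in> Wn n" "b \<in> Wn n" "c \<in> Wn n" "d \<in> Wn n" "mk n a b = mk n c d"
  shows "a = c \<and> b = d"
proof -
  have "\<And>m. m \<in> Mn n \<Longrightarrow> m \<in> a \<longleftrightarrow> m \<in> c"
    using mk_memX[OF assms(1,2)] mk_memX[OF assms(3,4)] assms(5) by simp
  moreover have "\<And>m. m \<in> Mn n \<Longrightarrow> m \<in> b \<longleftrightarrow> m \<in> d"
    using mk_memT[OF assms(1,2)] mk_memT[OF assms(3,4)] assms(5) by simp
  ultimately show ?thesis using assms(1-4) unfolding Wn_iff by blast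
qed

lemma mk_eq0: assumes "a \<in> Wn n" "b \<in> Wn n" shows "mk n a b = {} \<longleftrightarrow> a = {} \<and> b = {}"
  using mk_inj[OF assms empty_W empty_W] by auto

lemma Mn_Suc: assumes "m \<in> Mn (Suc n)"
  shows "(\<exists>m0 \<in> Mn n. m = Xm (Suc n) m0) \<or> (\<exists>m0 \<in> Mn n. m = Tm (Suc n) m0)"
proof -
  obtain I where I: "I \<subseteq> {1..Suc n}" "m = (I, {1..Suc n} - I)" using assms by (auto simp: Mn_def)
  show ?thesis
  proof (cases "Suc n \<in> I")
    case True
    have "(I - {Suc n}, {1..n} - (I - {Suc n})) \<in> Mn n" using I by (auto simp: Mn_mem)
    moreover have "m = Tm (Suc n) (I - {Suc n}, {1..n} - (I - {Suc n}))"
      using I True by (auto simp: Tm_def le_Suc_eq)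
    ultimately show ?thesis by blast
  next
    case False
    have "(I, {1..n} - I) \<in> Mn n" using I False by (auto simp: Mn_mem le_Suc_eq)
    moreover have "m = Xm (Suc n) (I, {1..n} - I)"
      using I False by (auto simp: Xm_def)
    ultimately show ?thesis by blast
  qed
qed

lemma mk_decomp: assumes "z \<in> Wn (Suc n)"
  shows "\<exists>a b. a \<in> Wn n \<and> b \<in> Wn n \<and> z = mk n a b"
proof -
  define a where "a = {m \<in> Mn n. Xm (Suc n) m \<in> z}"
  define b where "b = {m \<in> Mn n. Tm (Suc n) m \<in> z}"
  have W: "a \<in> Wn n" "b \<in> Wn n" unfolding a_def b_def Wn_iff by auto
  have "z = mk n a b"
  proof (rule set_eqI)
    fix m
    show "m \<in> z \<longleftrightarrow> m \<in> mk n a b"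
    proof (cases "m \<in> Mn (Suc n)")
      case True
      then show ?thesis using Mn_Suc[OF True] mk_memX[OF W] mk_memT[OF W]
        unfolding a_def b_def by auto
    next
      case False
      moreover have "mk n a b \<in> Wn (Suc n)" using W by simp
      ultimately show ?thesis using assms by (auto simp: Wn_iff)
    qed
  qed
  then show ?thesis using W by blast
qed

lemma Q1_mk: assumes "a \<in> Wn n" "b \<in> Wn n"
  shows "Q1 (mk n a b) = mk n (Q1 a) (radd a (Q1 b))"
proof -
  have f: "finite (Xm (Suc n) ` a)" "finite (Tm (Suc n) ` b)" using assms Wn_finite by auto
  show ?thesis unfolding mk_def
    using assms f by (simp add: Q1_radd Q1_X Q1_T av_W Wn_finite Tm_radd radd_ac)
qed

lemma Pop_mk: assumes "a \<in> Wn n" "b \<in> Wn n"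
  shows "Pop (mk n a b) = mk n (Pop a) (radd (Q1 a) (Pop b))"
proof -
  have f: "finite (Xm (Suc n) ` a)" "finite (Tm (Suc n) ` b)" using assms Wn_finite by auto
  show ?thesis unfolding mk_def
    using assms f by (simp add: Pop_radd Pop_X Pop_T av_W Wn_finite Tm_radd radd_ac)
qed

lemma exch_mk: "exch (mk n a b) = mk n (exch b) (exch a)"
  unfolding mk_def by (simp add: exch_radd exch_X exch_T radd_comm)

lemma rmul_single: assumes "\<And>p. p \<in> a \<Longrightarrow> mmul p q = {h p}" "inj_on h a"
  shows "rmul a {q} = h ` a"
proof -
  have "a \<times> {q} = (\<lambda>p. (p, q)) ` a" by auto
  then have "rmul a {q} = sumF (\<lambda>p. mmul p q) a"
    unfolding rmul_def by (simp add: sumF_image inj_on_def)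
  also have "\<dots> = sumF (\<lambda>p. {h p}) a" by (rule sumF_cong) (rule assms(1))
  also have "\<dots> = h ` a" by (rule sumF_singl_img[OF assms(2)])
  finally show ?thesis .
qed

lemma rmul_x: assumes "a \<in> Wn n" shows "rmul a (xv (Suc n)) = mk n a {}"
proof -
  have "rmul a (xv (Suc n)) = Xm (Suc n) ` a" unfolding xv_def
  proof (rule rmul_single)
    show "inj_on (Xm (Suc n)) a" by (rule inj_on_subset[OF Xm_injW]) (use assms in blast)
    fix p assume "p \<in> a"
    then have "p \<in> Mn n" using assms unfolding Wn_iff by blast
    then have "Suc n \<notin> snd p" using Mn_avoid by blast
    then show "mmul p ({}, {Suc n}) = {Xm (Suc n) p}" by (simp add: mmul_def Xm_def)
  qed
  then show ?thesis by (simp add: mk_def)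
qed

lemma rmul_t: assumes "a \<in> Wn n" shows "rmul a (tv (Suc n)) = mk n {} a"
proof -
  have "rmul a (tv (Suc n)) = Tm (Suc n) ` a" unfolding tv_def
  proof (rule rmul_single)
    show "inj_on (Tm (Suc n)) a" by (rule inj_on_subset[OF Tm_injW]) (use assms in blast)
    fix p assume "p \<in> a"
    then have "p \<in> Mn n" using assms unfolding Wn_iff by blast
    then have "Suc n \<notin> fst p" using Mn_avoid by blast
    then show "mmul p ({Suc n}, {}) = {Tm (Suc n) p}" by (simp add: mmul_def Tm_def)
  qed
  then show ?thesis by (simp add: mk_def)
qed

lemma sumF_mk: assumes "finite S" "\<And>x. x \<in> S \<Longrightarrow> f x \<in> Wn n" "\<And>x. x \<in> S \<Longrightarrow> g x \<in> Wn n"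
  shows "sumF (\<lambda>x. mk n (f x) (g x)) S = mk n (sumF f S) (sumF g S)"
  using assms
proof (induction S rule: finite_induct)
  case (insert x F)
  have W: "sumF f F \<in> Wn n" "sumF g F \<in> Wn n" using insert by (auto intro: sumF_W)
  show ?case using insert W by (simp add: sumF_insert mk_radd)
qed simp

lemma sumF_lin: assumes "finite S" "\<And>x. x \<in> S \<Longrightarrow> f x \<in> Wn n" "L {} = {}"
  "\<And>x y. x \<in> Wn n \<Longrightarrow> y \<in> Wn n \<Longrightarrow> L (radd x y) = radd (L x) (L y)"
  shows "sumF (\<lambda>x. L (f x)) S = L (sumF f S)"
  using assms(1,2)
proof (induction S rule: finite_induct)
  case (insert x F)
  have W: "sumF f F \<in> Wn n" using insert by (auto intro: sumF_W)
  show ?case using insert W by (simp add: sumF_insert assms(4))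
qed (simp add: assms(3))



definition Qs :: "relt \<Rightarrow> relt" where "Qs z = exch (Q1 (exch z))"
definition Ps :: "relt \<Rightarrow> relt" where "Ps z = exch (Pop (exch z))"

lemma Qs_W[simp]: "a \<in> Wn n \<Longrightarrow> Qs a \<in> Wn n" by (simp add: Qs_def)
lemma Ps_W[simp]: "a \<in> Wn n \<Longrightarrow> Ps a \<in> Wn n" by (simp add: Ps_def)
lemma Qs_Wr: "a \<in> Wn n \<Longrightarrow> b \<in> Wn n \<Longrightarrow> Qs (radd a b) = radd (Qs a) (Qs b)"
  by (simp add: Qs_def exch_radd Q1_Wr[where n=n])
lemma Ps_Wr: "a \<in> Wn n \<Longrightarrow> b \<in> Wn n \<Longrightarrow> Ps (radd a b) = radd (Ps a) (Ps b)"
  by (simp add: Ps_def exch_radd Pop_Wr[where n=n])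
lemma Qs_empty[simp]: "Qs {} = {}" by (simp add: Qs_def)
lemma Ps_empty[simp]: "Ps {} = {}" by (simp add: Ps_def)

lemma mk_eq: "a \<in> Wn n \<Longrightarrow> b \<in> Wn n \<Longrightarrow> c \<in> Wn n \<Longrightarrow> d \<in> Wn n \<Longrightarrow>
   mk n a b = mk n c d \<longleftrightarrow> a = c \<and> b = d"
  using mk_inj by blast

lemma Qs_mk: assumes "a \<in> Wn n" "b \<in> Wn n"
  shows "Qs (mk n a b) = mk n (radd b (Qs a)) (Qs b)"
  using assms by (simp add: Qs_def exch_mk Q1_mk exch_radd Q1_Wr[where n=n])

lemma Ps_mk: assumes "a \<in> Wn n" "b \<in> Wn n"
  shows "Ps (mk n a b) = mk n (radd (Ps a) (Qs b)) (Ps b)"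
  using assms by (simp add: Ps_def Qs_def exch_mk Pop_mk exch_radd radd_comm Pop_Wr[where n=n])

lemma W0: assumes "z \<in> Wn 0" shows "Q1 z = {}" "Pop z = {}"
proof -
  have m: "\<And>m. m \<in> z \<Longrightarrow> m = ({}, {})" using assms by (auto simp: Wn_iff Mn_def)
  have "Q1m ({}, {}) = {}" by (simp add: Q1m_def)
  then show "Q1 z = {}" unfolding Q1_def by (intro sumF_zero) (metis m)
  have "Pm ({}, {}) = {}" unfolding Pm_def by (rule sumF_zero) auto
  then show "Pop z = {}" unfolding Pop_def by (intro sumF_zero) (metis m)
qed

definition G :: "nat \<Rightarrow> bool" where
  "G n = (\<forall>z\<in>Wn n. Q1 (Q1 z) = {} \<and> Pop (Q1 z) = Q1 (Pop z) \<and> Pop (Pop z) = {}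
     \<and> Qs (Q1 z) = radd (Q1 (Qs z)) (if odd n then z else {})
     \<and> Ps (Q1 z) = radd (Q1 (Ps z)) (if even n then Qs z else {}))"

lemma G0: "G 0"
  unfolding G_def
proof
  fix z assume z: "z \<in> Wn 0"
  then have "exch z \<in> Wn 0" by simp
  then have "Q1 (exch z) = {}" "Pop (exch z) = {}" using W0 by blast+
  then show "Q1 (Q1 z) = {} \<and> Pop (Q1 z) = Q1 (Pop z) \<and> Pop (Pop z) = {}
     \<and> Qs (Q1 z) = radd (Q1 (Qs z)) (if odd 0 then z else {})
     \<and> Ps (Q1 z) = radd (Q1 (Ps z)) (if even 0 then Qs z else {})"
    using W0[OF z] by (simp add: Qs_def Ps_def)
qed

lemma GSuc: assumes "G n" shows "G (Suc n)"
  unfolding G_def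
proof
  fix z assume "z \<in> Wn (Suc n)"
  then obtain a b where ab: "a \<in> Wn n" "b \<in> Wn n" "z = mk n a b" using mk_decomp by blast
  have h1: "\<And>x. x \<in> Wn n \<Longrightarrow> Q1 (Q1 x) = {}"
   and h2: "\<And>x. x \<in> Wn n \<Longrightarrow> Pop (Q1 x) = Q1 (Pop x)"
   and h5: "\<And>x. x \<in> Wn n \<Longrightarrow> Pop (Pop x) = {}"
   and h3: "\<And>x. x \<in> Wn n \<Longrightarrow> Qs (Q1 x) = radd (Q1 (Qs x)) (if odd n then x else {})"
   and h4: "\<And>x. x \<in> Wn n \<Longrightarrow> Ps (Q1 x) = radd (Q1 (Ps x)) (if even n then Qs x else {})"
    using assms unfolding G_def by blast+
  show "Q1 (Q1 z) = {} \<and> Pop (Q1 z) = Q1 (Pop z) \<and> Pop (Pop z) = {}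
     \<and> Qs (Q1 z) = radd (Q1 (Qs z)) (if odd (Suc n) then z else {})
     \<and> Ps (Q1 z) = radd (Q1 (Ps z)) (if even (Suc n) then Qs z else {})"
  proof (cases "odd n")
    case True
    then show ?thesis using ab
      by (simp add: Q1_mk Pop_mk Qs_mk Ps_mk mk_radd mk_eq mk_eq0 h1 h2 h3 h4 h5 radd_ac
        Q1_Wr[where n=n] Pop_Wr[where n=n] Qs_Wr[where n=n] Ps_Wr[where n=n])
  next
    case False
    then show ?thesis using ab
      by (simp add: Q1_mk Pop_mk Qs_mk Ps_mk mk_radd mk_eq mk_eq0 h1 h2 h3 h4 h5 radd_ac
        Q1_Wr[where n=n] Pop_Wr[where n=n] Qs_Wr[where n=n] Ps_Wr[where n=n])
  qed
qed

lemma G_all: "G n"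
  by (induction n) (simp_all add: G0 GSuc)

lemma QQ: "z \<in> Wn n \<Longrightarrow> Q1 (Q1 z) = {}" using G_all unfolding G_def by blast
lemma PQ: "z \<in> Wn n \<Longrightarrow> Pop (Q1 z) = Q1 (Pop z)" using G_all unfolding G_def by blast
lemma PP: "z \<in> Wn n \<Longrightarrow> Pop (Pop z) = {}" using G_all unfolding G_def by blast
lemma QsQ: "z \<in> Wn n \<Longrightarrow> Qs (Q1 z) = radd (Q1 (Qs z)) (if odd n then z else {})"
  using G_all unfolding G_def by blast
lemma PsQ: "z \<in> Wn n \<Longrightarrow> Ps (Q1 z) = radd (Q1 (Ps z)) (if even n then Qs z else {})"
  using G_all unfolding G_def by blast



lemma exch_Q1: "exch (Q1 x) = Qs (exch x)" by (simp add: Qs_def)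
lemma QsQs: "x \<in> Wn n \<Longrightarrow> Qs (Qs x) = {}" by (simp add: Qs_def QQ[where n=n])

lemma QsQe: "even n \<Longrightarrow> x \<in> Wn n \<Longrightarrow> Q1 (Qs x) = Qs (Q1 x)"
  using QsQ[of x n] by simp

lemma PQs: assumes "even n" "x \<in> Wn n" shows "Pop (Qs x) = radd (Qs (Pop x)) (Q1 x)"
proof -
  have y: "exch x \<in> Wn n" using assms by simp
  have "Ps (Q1 (exch x)) = radd (Q1 (Ps (exch x))) (Qs (exch x))"
    using PsQ[OF y] assms by simp
  then have "exch (Pop (Qs x)) = radd (Q1 (exch (Pop x))) (exch (Q1 x))"
    by (simp add: Ps_def Qs_def)
  then have "exch (exch (Pop (Qs x))) = exch (radd (Q1 (exch (Pop x))) (exch (Q1 x)))" by simp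
  then show ?thesis by (simp add: exch_radd Qs_def)
qed

definition I4 :: "relt \<Rightarrow> bool" where "I4 w = (w = radd (exch w) (Q1 (exch (Q1 w))))"

lemma I4_alt: "I4 w \<longleftrightarrow> exch w = radd w (Qs (Q1 w))"
proof -
  have "I4 w \<longleftrightarrow> exch w = exch (radd (exch w) (Q1 (exch (Q1 w))))"
    unfolding I4_def by (metis exch_exch)
  also have "\<dots> \<longleftrightarrow> exch w = radd w (Qs (Q1 w))" by (simp add: exch_radd Qs_def)
  finally show ?thesis .
qed

lemma I4_exch: assumes "even n" "w \<in> Wn n" "I4 w" shows "I4 (exch w)"
proof -
  have e: "exch w = radd w (Qs (Q1 w))" using assms(3) I4_alt by blast
  have "Q1 (Qs w) = Qs (Q1 w)" using QsQe assms by blast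
  then have h: "Q1 (exch (Q1 (exch w))) = Qs (Q1 w)" by (simp add: Qs_def)
  show ?thesis unfolding I4_def exch_exch h using e by simp
qed

definition y1 :: "nat \<Rightarrow> relt \<Rightarrow> relt" where "y1 n p = mk n (Q1 p) p"
definition z1 :: "nat \<Rightarrow> relt \<Rightarrow> relt" where "z1 n p = mk (Suc n) (y1 n p) {}"

lemma y1_W[simp]: "p \<in> Wn n \<Longrightarrow> y1 n p \<in> Wn (Suc n)" by (simp add: y1_def)
lemma z1_W[simp]: "p \<in> Wn n \<Longrightarrow> z1 n p \<in> Wn (Suc (Suc n))" by (simp add: z1_def)

lemma inv_z1: assumes "even n" "p \<in> Wn n" "Pop p = {}" "Pop (exch p) = {}" "I4 p"
  shows "Pop (z1 n p) = {}" "Pop (exch (z1 n p)) = {}" "I4 (z1 n p)" "I4 (exch (z1 n p))"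
proof -
  have W: "exch p \<in> Wn n" "Q1 p \<in> Wn n" using assms by simp_all
  note lin = Q1_Wr[where n=n] Pop_Wr[where n=n] Qs_Wr[where n=n]
  show 1: "Pop (z1 n p) = {}" using assms
    by (simp add: z1_def y1_def Pop_mk Q1_mk QQ[where n=n] PQ[where n=n] mk_radd lin)
  have pe: "Pop (exch (Q1 p)) = Q1 (exch p)"
    using PQs[OF assms(1) W(1)] assms(4) by (simp add: Qs_def)
  show 2: "Pop (exch (z1 n p)) = {}" using assms W pe
    by (simp add: z1_def y1_def exch_mk Pop_mk Q1_mk mk_radd mk_eq0 lin)
  have e: "exch p = radd p (Qs (Q1 p))" using assms(5) I4_alt by blast
  have q: "Q1 (Qs (Q1 p)) = {}" using QsQe[OF assms(1) W(2)] QQ[OF assms(2)] by simp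
  have qs2: "Qs (Qs (Q1 p)) = {}" using QsQs W(2) by blast
  have X1: "Q1 (y1 n p) = {}" using assms W
    by (simp add: y1_def Q1_mk QQ[where n=n] mk_eq0 lin)
  have eq: "exch (Q1 p) = Qs p" using e W qs2 assms(2) by (simp add: exch_Q1 lin)
  have X2: "exch (y1 n p) = Qs (y1 n p)" using assms W
    by (simp add: y1_def exch_mk Qs_mk eq e)
  have YW: "y1 n p \<in> Wn (Suc n)" "exch (y1 n p) \<in> Wn (Suc n)" using assms by simp_all
  have q1: "Q1 (exch (y1 n p)) = y1 n p"
  proof -
    have "{} = radd (Q1 (Qs (y1 n p))) (y1 n p)" using QsQ[OF YW(1)] X1 assms(1) by simp
    then show ?thesis using X2 radd_eq0 by metis
  qed
  have "radd (exch (z1 n p)) (Q1 (exch (Q1 (z1 n p)))) = radd (mk (Suc n) {} (exch (y1 n p))) (mk (Suc n) (Q1 (exch (y1 n p))) (exch (y1 n p)))"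
    using YW X1 by (simp add: z1_def exch_mk Q1_mk)
  also have "\<dots> = mk (Suc n) (Q1 (exch (y1 n p))) {}" using YW by (simp add: mk_radd)
  also have "\<dots> = z1 n p" using q1 by (simp add: z1_def)
  finally show 3: "I4 (z1 n p)" unfolding I4_def by simp
  show "I4 (exch (z1 n p))"
    by (rule I4_exch[of "Suc (Suc n)"]) (use assms 3 in auto)
qed

lemma mk_inj1: "mk n a b = mk n c d \<Longrightarrow> a \<in> Wn n \<Longrightarrow> b \<in> Wn n \<Longrightarrow> c \<in> Wn n \<Longrightarrow> d \<in> Wn n \<Longrightarrow> a = c"
  using mk_inj by blast
lemma mk_inj2: "mk n a b = mk n c d \<Longrightarrow> a \<in> Wn n \<Longrightarrow> b \<in> Wn n \<Longrightarrow> c \<in> Wn n \<Longrightarrow> d \<in> Wn n \<Longrightarrow> b = d"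
  using mk_inj by blast

lemma inv_y1: assumes "even n" "p \<in> Wn n" "Pop p = {}" "Pop (exch p) = {}"
  shows "Pop (y1 n p) = {}" "Pop (exch (y1 n p)) = {}"
proof -
  have W: "exch p \<in> Wn n" "Q1 p \<in> Wn n" using assms by simp_all
  note lin = Q1_Wr[where n=n] Pop_Wr[where n=n] Qs_Wr[where n=n]
  show "Pop (y1 n p) = {}" using assms
    by (simp add: y1_def Pop_mk Q1_mk QQ[where n=n] PQ[where n=n] mk_eq0 lin)
  have pe: "Pop (exch (Q1 p)) = Q1 (exch p)"
    using PQs[OF assms(1) W(1)] assms(4) by (simp add: Qs_def)
  show "Pop (exch (y1 n p)) = {}" using assms W pe
    by (simp add: y1_def exch_mk Pop_mk mk_eq0 lin)
qed

lemma mk2_Pop: assumes "a \<in> Wn n" "b \<in> Wn n" "c \<in> Wn n" "d \<in> Wn n"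
  shows "Pop (mk (Suc n) (mk n a b) (mk n c d)) = mk (Suc n) (mk n (Pop a) (radd (Q1 a) (Pop b)))
     (mk n (radd (Q1 a) (Pop c)) (radd a (radd (Q1 b) (radd (Q1 c) (Pop d)))))"
  using assms by (simp add: Pop_mk Q1_mk mk_radd Q1_Wr[where n=n] Pop_Wr[where n=n] radd_ac)

lemma z1_exch: assumes "s1 \<in> Wn n" "s2 \<in> Wn n"
  shows "radd (z1 n s1) (exch (z1 n s2)) = mk (Suc n) (mk n (Q1 s1) s1) (mk n (exch s2) (exch (Q1 s2)))"
  using assms by (simp add: z1_def y1_def exch_mk mk_radd)

lemma even_indep: assumes ev: "even n" and W: "s1 \<in> Wn n" "s2 \<in> Wn n"
  and cyc: "Pop s1 = {}" "Pop s2 = {}" and i4: "I4 s2"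
  and w: "w \<in> Wn (Suc (Suc n))" and eq: "radd (z1 n s1) (exch (z1 n s2)) = Pop w"
  shows "\<exists>w'\<in>Wn n. s2 = Pop w'" "\<exists>w'\<in>Wn n. radd s1 (exch s2) = Pop w'"
proof -
  obtain x y where xy: "x \<in> Wn (Suc n)" "y \<in> Wn (Suc n)" "w = mk (Suc n) x y" using mk_decomp w by blast
  obtain a0 b0 where ab: "a0 \<in> Wn n" "b0 \<in> Wn n" "x = mk n a0 b0" using mk_decomp xy by blast
  obtain c0 d0 where cd: "c0 \<in> Wn n" "d0 \<in> Wn n" "y = mk n c0 d0" using mk_decomp xy by blast
  have "mk (Suc n) (mk n (Q1 s1) s1) (mk n (exch s2) (exch (Q1 s2))) = mk (Suc n) (mk n (Pop a0) (radd (Q1 a0) (Pop b0)))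
     (mk n (radd (Q1 a0) (Pop c0)) (radd a0 (radd (Q1 b0) (radd (Q1 c0) (Pop d0)))))"
    using eq z1_exch[OF W] mk2_Pop[OF ab(1,2) cd(1,2)] xy ab cd by simp
  note e0 = this
  have i1: "mk n (Q1 s1) s1 = mk n (Pop a0) (radd (Q1 a0) (Pop b0))"
    by (rule mk_inj1[OF e0]) (use W ab cd in simp_all)
  have i2: "mk n (exch s2) (exch (Q1 s2)) = mk n (radd (Q1 a0) (Pop c0)) (radd a0 (radd (Q1 b0) (radd (Q1 c0) (Pop d0))))"
    by (rule mk_inj2[OF e0]) (use W ab cd in simp_all)
  have E: "Q1 s1 = Pop a0" "s1 = radd (Q1 a0) (Pop b0)" "exch s2 = radd (Q1 a0) (Pop c0)"
     "exch (Q1 s2) = radd a0 (radd (Q1 b0) (radd (Q1 c0) (Pop d0)))"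
    by (rule mk_inj1[OF i1] mk_inj2[OF i1] mk_inj1[OF i2] mk_inj2[OF i2]; use W ab cd in simp)+
  note lin = Q1_Wr[where n=n] Pop_Wr[where n=n]
  have "s2 = radd (exch s2) (Q1 (exch (Q1 s2)))" using i4 unfolding I4_def .
  also have "\<dots> = Pop (radd c0 (Q1 d0))" unfolding E(3,4)
    using ab cd by (simp add: lin QQ[where n=n] PQ[where n=n] radd_ac)
  finally show "\<exists>w'\<in>Wn n. s2 = Pop w'" using cd by auto
  have "radd s1 (exch s2) = Pop (radd b0 c0)" unfolding E(2,3)
    using ab cd by (simp add: lin radd_ac)
  then show "\<exists>w'\<in>Wn n. radd s1 (exch s2) = Pop w'" using ab cd by auto
qed

lemma even_recon: assumes ev: "even n"
  and W: "a \<in> Wn n" "b \<in> Wn n" "c \<in> Wn n" "d \<in> Wn n" "s1 \<in> Wn n" "s2 \<in> Wn n" "w1 \<in> Wn n" "w2 \<in> Wn n"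
  and cz: "Pop b = Q1 a" "Pop c = Q1 a" "a = radd (Q1 b) (radd (Q1 c) (Pop d))"
  and cs: "Pop s1 = {}" "Pop s2 = {}" "I4 s2"
  and h1: "Pop w1 = radd (radd (radd b c) (exch s2)) s1"
  and h2: "Pop w2 = radd (radd c (Q1 d)) s2"
  shows "mk (Suc n) (mk n a b) (mk n c d) = radd (radd (z1 n s1) (exch (z1 n s2)))
     (Pop (mk (Suc n) (mk n (radd (radd d (exch (Q1 s2))) (Q1 w1)) (radd w1 w2)) (mk n w2 {})))"
proof -
  have e2: "exch s2 = radd s2 (Qs (Q1 s2))" using cs(3) I4_alt by blast
  have WW: "exch (Q1 s2) \<in> Wn n" "exch s2 \<in> Wn n" using W by simp_all
  note lin = Q1_Wr[where n=n] Pop_Wr[where n=n] Qs_Wr[where n=n]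
  note alg = lin QQ[where n=n] PQ[where n=n] PP[where n=n] QsQs[where n=n] QsQe[OF ev] PQs[OF ev] exch_Q1
  have A: "a = radd (Q1 s1) (Pop (radd (radd d (exch (Q1 s2))) (Q1 w1)))"
    using W WW cz cs e2 h1 h2 by (simp add: alg radd_ac)
  have B: "b = radd s1 (radd (Q1 (radd (radd d (exch (Q1 s2))) (Q1 w1))) (Pop (radd w1 w2)))"
    using W WW cz cs e2 h1 h2 by (simp add: alg radd_ac)
  have C: "c = radd (exch s2) (radd (Q1 (radd (radd d (exch (Q1 s2))) (Q1 w1))) (Pop w2))"
    using W WW cz cs e2 h1 h2 by (simp add: alg radd_ac)
  have D: "d = radd (exch (Q1 s2)) (radd (radd (radd d (exch (Q1 s2))) (Q1 w1)) (radd (Q1 (radd w1 w2)) (Q1 w2)))"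
    using W WW by (simp add: alg radd_ac)
  define a0 where "a0 = radd (radd d (exch (Q1 s2))) (Q1 w1)"
  define b0 where "b0 = radd w1 w2"
  have W0: "a0 \<in> Wn n" "b0 \<in> Wn n" unfolding a0_def b0_def using W WW by simp_all
  have L: "mk (Suc n) (mk n a b) (mk n c d) = mk (Suc n) (mk n (radd (Q1 s1) (Pop a0)) (radd s1 (radd (Q1 a0) (Pop b0))))
      (mk n (radd (exch s2) (radd (Q1 a0) (Pop w2))) (radd (exch (Q1 s2)) (radd a0 (radd (Q1 b0) (Q1 w2)))))"
    unfolding a0_def b0_def
    by (intro arg_cong2[where f="mk (Suc n)"] arg_cong2[where f="mk n"]) (fact A B C D)+
  have R: "radd (radd (z1 n s1) (exch (z1 n s2))) (Pop (mk (Suc n) (mk n a0 b0) (mk n w2 {}))) =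
     mk (Suc n) (mk n (radd (Q1 s1) (Pop a0)) (radd s1 (radd (Q1 a0) (Pop b0))))
      (mk n (radd (exch s2) (radd (Q1 a0) (Pop w2))) (radd (exch (Q1 s2)) (radd a0 (radd (Q1 b0) (Q1 w2)))))"
    using W WW W0 by (simp add: z1_exch mk2_Pop mk_radd radd_ac)
  show ?thesis using L R unfolding a0_def b0_def by simp
qed

lemma Qs_exch: "Qs (exch x) = exch (Q1 x)" by (simp add: Qs_def)

lemma y1_exch: assumes "s1 \<in> Wn n" "s2 \<in> Wn n"
  shows "radd (y1 n s1) (exch (y1 n s2)) = mk n (radd (Q1 s1) (exch s2)) (radd s1 (exch (Q1 s2)))"
  using assms by (simp add: y1_def exch_mk mk_radd)

lemma odd_indep: assumes ev: "even n" and W: "s1 \<in> Wn n" "s2 \<in> Wn n"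
  and cyc: "Pop s1 = {}" and i4: "I4 s1"
  and w: "w \<in> Wn (Suc n)" and eq: "radd (y1 n s1) (exch (y1 n s2)) = Pop w"
  shows "\<exists>w'\<in>Wn n. exch s1 = Pop w'" "s1 = {} \<Longrightarrow> \<exists>w'\<in>Wn n. exch s2 = Pop w'"
proof -
  obtain a0 b0 where ab: "a0 \<in> Wn n" "b0 \<in> Wn n" "w = mk n a0 b0" using mk_decomp w by blast
  have e0: "mk n (radd (Q1 s1) (exch s2)) (radd s1 (exch (Q1 s2))) = mk n (Pop a0) (radd (Q1 a0) (Pop b0))"
    using eq y1_exch[OF W] ab by (simp add: Pop_mk)
  have E1: "radd (Q1 s1) (exch s2) = Pop a0" by (rule mk_inj1[OF e0]) (use W ab in simp_all)
  have E2: "radd s1 (exch (Q1 s2)) = radd (Q1 a0) (Pop b0)" by (rule mk_inj2[OF e0]) (use W ab in simp_all)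
  have q: "Q1 s1 = radd (Pop a0) (exch s2)" using E1 by (metis radd_self2 radd_comm)
  have s: "s1 = radd (radd (Q1 a0) (Pop b0)) (exch (Q1 s2))" using E2 by (metis radd_self2 radd_comm)
  note lin = Q1_Wr[where n=n] Pop_Wr[where n=n] Qs_Wr[where n=n]
  have "exch s1 = radd s1 (Qs (Q1 s1))" using i4 I4_alt by blast
  also have "\<dots> = radd s1 (Qs (radd (Pop a0) (exch s2)))" by (simp only: q)
  also have "\<dots> = Pop (radd b0 (Qs a0))"
    apply (subst (1) s) using W ab by (simp add: lin PQs[OF ev] Qs_exch radd_ac)
  finally show "\<exists>w'\<in>Wn n. exch s1 = Pop w'" using ab by auto
  assume "s1 = {}"
  then have "exch s2 = Pop a0" using E1 by simp
  then show "\<exists>w'\<in>Wn n. exch s2 = Pop w'" using ab by auto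
qed

lemma odd_recon: assumes ev: "even n"
  and W: "a \<in> Wn n" "b \<in> Wn n" "s1 \<in> Wn n" "s2 \<in> Wn n" "w1 \<in> Wn n" "w2 \<in> Wn n"
  and cz: "Pop a = {}" "Pop b = Q1 a"
  and cs: "Pop s1 = {}" "I4 s1"
  and h1: "Pop w1 = radd a (exch s2)"
  and h2: "Pop w2 = radd (radd b (Qs a)) (exch s1)"
  shows "mk n a b = radd (radd (y1 n s1) (exch (y1 n s2)))
     (Pop (mk n (radd w1 (Qs s1)) (radd w2 (Qs (radd w1 (Qs s1))))))"
proof -
  have e1: "exch s1 = radd s1 (Qs (Q1 s1))" using cs(2) I4_alt by blast
  have WW: "exch (Q1 s2) \<in> Wn n" "exch s2 \<in> Wn n" using W by simp_all
  note lin = Q1_Wr[where n=n] Pop_Wr[where n=n] Qs_Wr[where n=n]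
  note alg = lin QQ[where n=n] PQ[where n=n] PP[where n=n] QsQs[where n=n] QsQe[OF ev] PQs[OF ev] Qs_exch
  define al where "al = radd w1 (Qs s1)"
  have Wal: "al \<in> Wn n" unfolding al_def using W by simp
  have A: "a = radd (radd (Q1 s1) (exch s2)) (Pop al)"
    unfolding al_def using W WW cz cs h1 by (simp add: alg radd_ac)
  have B: "b = radd (radd s1 (exch (Q1 s2))) (radd (Q1 al) (Pop (radd w2 (Qs al))))"
    unfolding al_def using W WW cz cs h1 h2 e1 by (simp add: alg radd_ac)
  have "mk n a b = mk n (radd (radd (Q1 s1) (exch s2)) (Pop al)) (radd (radd s1 (exch (Q1 s2))) (radd (Q1 al) (Pop (radd w2 (Qs al)))))"
    by (intro arg_cong2[where f="mk n"]) (fact A B)+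
  also have "\<dots> = radd (radd (y1 n s1) (exch (y1 n s2))) (Pop (mk n al (radd w2 (Qs al))))"
    using W WW Wal by (simp add: y1_exch Pop_mk mk_radd radd_ac)
  finally show ?thesis unfolding al_def .
qed



lemma sum_split: assumes fin: "finite B" and inj: "inj_on f B" "inj_on g B"
  and dis: "f ` B \<inter> g ` B = {}" and S: "S \<subseteq> f ` B \<union> g ` B"
  shows "S = f ` {p\<in>B. f p \<in> S} \<union> g ` {p\<in>B. g p \<in> S}"
    "sumF (\<lambda>b. b) S = radd (sumF f {p\<in>B. f p \<in> S}) (sumF g {p\<in>B. g p \<in> S})"
proof -
  show e: "S = f ` {p\<in>B. f p \<in> S} \<union> g ` {p\<in>B. g p \<in> S}" using S by blast
  have "sumF (\<lambda>b. b) (f ` {p\<in>B. f p \<in> S} \<union> g ` {p\<in>B. g p \<in> S})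
     = radd (sumF (\<lambda>b. b) (f ` {p\<in>B. f p \<in> S})) (sumF (\<lambda>b. b) (g ` {p\<in>B. g p \<in> S}))"
    by (rule sumF_union) (use fin dis in auto)
  also have "sumF (\<lambda>b. b) (f ` {p\<in>B. f p \<in> S}) = sumF f {p\<in>B. f p \<in> S}"
    by (subst sumF_image) (auto intro: inj_on_subset[OF inj(1)])
  also have "sumF (\<lambda>b. b) (g ` {p\<in>B. g p \<in> S}) = sumF g {p\<in>B. g p \<in> S}"
    by (subst sumF_image) (auto intro: inj_on_subset[OF inj(2)])
  finally show "sumF (\<lambda>b. b) S = radd (sumF f {p\<in>B. f p \<in> S}) (sumF g {p\<in>B. g p \<in> S})"
    using e by simp
qed

lemma sum_comb: assumes fin: "finite B" and inj: "inj_on f B" "inj_on g B"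
  and dis: "f ` B \<inter> g ` B = {}" and S: "S1 \<subseteq> B" "S2 \<subseteq> B"
  shows "sumF (\<lambda>b. b) (f ` S1 \<union> g ` S2) = radd (sumF f S1) (sumF g S2)"
proof -
  have "sumF (\<lambda>b. b) (f ` S1 \<union> g ` S2) = radd (sumF (\<lambda>b. b) (f ` S1)) (sumF (\<lambda>b. b) (g ` S2))"
    by (rule sumF_union) (use fin dis S in \<open>auto intro: finite_subset\<close>)
  also have "sumF (\<lambda>b. b) (f ` S1) = sumF f S1"
    by (subst sumF_image) (rule inj_on_subset[OF inj(1) S(1)], simp)
  also have "sumF (\<lambda>b. b) (g ` S2) = sumF g S2"
    by (subst sumF_image) (rule inj_on_subset[OF inj(2) S(2)], simp)
  finally show ?thesis .
qed

lemma sumF_id_lin: assumes "finite S" "S \<subseteq> Wn n" "L {} = {}"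
  "\<And>x y. x \<in> Wn n \<Longrightarrow> y \<in> Wn n \<Longrightarrow> L (radd x y) = radd (L x) (L y)"
  shows "sumF L S = L (sumF (\<lambda>b. b) S)"
  using sumF_lin[of S "\<lambda>b. b" n L] assms by auto

lemma sumF_id_W: "S \<subseteq> Wn n \<Longrightarrow> sumF (\<lambda>b. b) S \<in> Wn n"
  by (rule sumF_W) auto

lemma lin_zero: assumes "finite S" "S \<subseteq> Wn n" "L {} = {}"
  "\<And>x y. x \<in> Wn n \<Longrightarrow> y \<in> Wn n \<Longrightarrow> L (radd x y) = radd (L x) (L y)"
  "\<And>x. x \<in> S \<Longrightarrow> L x = {}"
  shows "L (sumF (\<lambda>b. b) S) = {}"
  using sumF_id_lin[OF assms(1-4)] sumF_zero[of S L] assms(5) by simp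

lemma sumF_exch_img: assumes "finite T" "T \<subseteq> Wn n"
  shows "sumF (\<lambda>b. b) (exch ` T) = exch (sumF (\<lambda>b. b) T)"
proof -
  have "sumF (\<lambda>b. b) (exch ` T) = sumF exch T"
    by (subst sumF_image) (auto simp: inj_on_def dest: exch_inj)
  also have "\<dots> = exch (sumF (\<lambda>b. b) T)"
    by (rule sumF_id_lin[OF assms]) (simp_all add: exch_radd)
  finally show ?thesis .
qed

lemma y1_inj: assumes "p \<in> Wn n" "q \<in> Wn n" "y1 n p = y1 n q" shows "p = q"
  using mk_inj[where n=n and a="Q1 p" and b=p and c="Q1 q" and d=q] assms by (simp add: y1_def)
lemma z1_inj: assumes "p \<in> Wn n" "q \<in> Wn n" "z1 n p = z1 n q" shows "p = q"
proof -
  have "y1 n p = y1 n q"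
    using mk_inj[where n="Suc n" and a="y1 n p" and b="{}" and c="y1 n q" and d="{}"] assms by (simp add: z1_def)
  then show ?thesis using y1_inj assms by blast
qed
lemma z1_dis: assumes "p \<in> Wn n" "q \<in> Wn n" "z1 n p = exch (z1 n q)" shows "p = {}"
proof -
  have "mk (Suc n) (y1 n p) {} = mk (Suc n) {} (exch (y1 n q))"
    using assms(3) by (simp add: z1_def exch_mk)
  then have "y1 n p = {}" by (rule mk_inj1) (use assms in simp_all)
  then show ?thesis using assms unfolding y1_def by (simp add: mk_eq0)
qed

lemma rx: "b \<in> Wn n \<Longrightarrow> Q1 (rmul b (xv (Suc n))) = y1 n b"
  by (simp add: rmul_x Q1_mk y1_def)
lemma rz1: "b \<in> Wn n \<Longrightarrow> rmul (y1 n b) (xv (Suc (Suc n))) = z1 n b"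
  by (simp add: rmul_x z1_def)
lemma rz2: "b \<in> Wn n \<Longrightarrow> rmul (exch (y1 n b)) (tv (Suc (Suc n))) = exch (z1 n b)"
  by (simp add: rmul_t z1_def exch_mk)

lemma Beven_Suc': assumes "\<forall>p \<in> Beven t. p \<in> Wn (2*t)"
  shows "Beven (Suc t) = z1 (2*t) ` Beven t \<union> (\<lambda>p. exch (z1 (2*t) p)) ` Beven t"
proof -
  have e: "2*t+1 = Suc (2*t)" "2*t+2 = Suc (Suc (2*t))" by simp_all
  have 1: "\<And>b. b \<in> Beven t \<Longrightarrow> rmul (Q1 (rmul b (xv (2*t+1)))) (xv (2*t+2)) = z1 (2*t) b"
    using assms by (simp only: e rx rz1)
  have 2: "\<And>b. b \<in> Beven t \<Longrightarrow> rmul (exch (Q1 (rmul b (xv (2*t+1))))) (tv (2*t+2)) = exch (z1 (2*t) b)"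
    using assms by (simp only: e rx rz2)
  have a: "{rmul (Q1 (rmul b (xv (2*t+1)))) (xv (2*t+2)) | b. b \<in> Beven t} = z1 (2*t) ` Beven t"
    unfolding Setcompr_eq_image by (rule image_cong[OF refl 1])
  have b: "{rmul (exch (Q1 (rmul b (xv (2*t+1))))) (tv (2*t+2)) | b. b \<in> Beven t} = (\<lambda>p. exch (z1 (2*t) p)) ` Beven t"
    unfolding Setcompr_eq_image by (rule image_cong[OF refl 2])
  show ?thesis unfolding Beven.simps a b ..
qed

lemma Bodd': assumes "\<forall>p \<in> Beven t. p \<in> Wn (2*t)"
  shows "Bodd t = y1 (2*t) ` Beven t \<union> (\<lambda>p. exch (y1 (2*t) p)) ` Beven t"
proof -
  have e: "2*t+1 = Suc (2*t)" by simp_all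
  have 1: "\<And>b. b \<in> Beven t \<Longrightarrow> Q1 (rmul b (xv (2*t+1))) = y1 (2*t) b"
    using assms by (simp only: e rx)
  have a: "{Q1 (rmul b (xv (2*t+1))) | b. b \<in> Beven t} = y1 (2*t) ` Beven t"
    unfolding Setcompr_eq_image by (rule image_cong[OF refl 1])
  have b: "{exch (Q1 (rmul b (xv (2*t+1)))) | b. b \<in> Beven t} = (\<lambda>p. exch (y1 (2*t) p)) ` Beven t"
    unfolding Setcompr_eq_image using 1 by (intro image_cong) simp_all
  show ?thesis unfolding Bodd_def a b ..
qed

definition indep :: "relt set \<Rightarrow> nat \<Rightarrow> bool" where
  "indep B n = (\<forall>S\<subseteq>B. (\<exists>w\<in>Wn n. sumF (\<lambda>b. b) S = Pop w) \<longrightarrow> S = {})"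
definition span :: "relt set \<Rightarrow> nat \<Rightarrow> bool" where
  "span B n = (\<forall>z\<in>Wn n. Pop z = {} \<longrightarrow> (\<exists>S\<subseteq>B. \<exists>w\<in>Wn n. z = radd (sumF (\<lambda>b. b) S) (Pop w)))"

definition GoodE :: "nat \<Rightarrow> bool" where
  "GoodE t = (finite (Beven t) \<and> (\<forall>p\<in>Beven t. p \<in> Wn (2*t) \<and> Pop p = {} \<and> Pop (exch p) = {} \<and> I4 p \<and> exch p \<in> Beven t)
     \<and> indep (Beven t) (2*t) \<and> span (Beven t) (2*t))"

lemma indep_nz: assumes "indep B n" shows "{} \<notin> B"
proof
  assume "{} \<in> B"
  then have "{{}} \<subseteq> B" by simp
  moreover have "\<exists>w\<in>Wn n. sumF (\<lambda>b. b) {{}} = Pop w" by (intro bexI[of _ "{}"]) simp_all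
  ultimately have "{{}} = ({}::relt set)" using assms unfolding indep_def by blast
  then show False by simp
qed

lemma Wn0: "z \<in> Wn 0 \<Longrightarrow> z = {} \<or> z = one"
proof -
  assume "z \<in> Wn 0"
  then have "z \<subseteq> {({}, {})}" by (auto simp: Wn_iff Mn_def)
  then show ?thesis unfolding one_def by blast
qed

lemma one_W: "one \<in> Wn 0" by (auto simp: Wn_iff Mn_def one_def)

lemma GoodE0: "GoodE 0"
proof -
  have eo: "exch one = one" by (simp add: exch_def one_def)
  have po: "Pop one = {}" "Q1 one = {}" using W0 one_W by auto
  have i4: "I4 one" unfolding I4_def by (simp add: eo po)
  have ind: "indep {one} 0" unfolding indep_def
  proof (intro allI impI)
    fix S assume S: "S \<subseteq> {one}" "\<exists>w\<in>Wn 0. sumF (\<lambda>b. b) S = Pop w"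
    then have "sumF (\<lambda>b. b) S = {}" using W0 by auto
    then show "S = {}" using S(1) by (auto simp: one_def subset_singleton_iff)
  qed
  have sp: "span {one} 0" unfolding span_def
  proof (intro ballI impI)
    fix z assume "z \<in> Wn 0"
    then have "z = {} \<or> z = one" by (rule Wn0)
    then show "\<exists>S\<subseteq>{one}. \<exists>w\<in>Wn 0. z = radd (sumF (\<lambda>b. b) S) (Pop w)"
    proof
      assume "z = {}"
      then have h: "z = radd (sumF (\<lambda>b. b) {}) (Pop {})" by simp
      show ?thesis
      proof (rule exI[of _ "{}"], rule conjI)
        show "{} \<subseteq> {one}" by simp
        show "\<exists>w\<in>Wn 0. z = radd (sumF (\<lambda>b. b) {}) (Pop w)" by (rule bexI[of _ "{}"]) (rule h, rule empty_W)
      qed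
    next
      assume "z = one"
      then have h: "z = radd (sumF (\<lambda>b. b) {one}) (Pop {})" by simp
      show ?thesis
      proof (rule exI[of _ "{one}"], rule conjI)
        show "{one} \<subseteq> {one}" by simp
        show "\<exists>w\<in>Wn 0. z = radd (sumF (\<lambda>b. b) {one}) (Pop w)" by (rule bexI[of _ "{}"]) (rule h, rule empty_W)
      qed
    qed
  qed
  show ?thesis unfolding GoodE_def using one_W po eo i4 ind sp by simp
qed

lemma I4_empty[simp]: "I4 {}" by (simp add: I4_def)

lemma radd_solve: "x = radd y z \<Longrightarrow> z = radd x y" unfolding radd_def by blast

lemma z1_lin: "x \<in> Wn n \<Longrightarrow> y \<in> Wn n \<Longrightarrow> z1 n (radd x y) = radd (z1 n x) (z1 n y)"
  by (simp add: z1_def y1_def mk_radd Q1_Wr[where n=n])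
lemma z1_empty: "z1 n {} = {}" by (simp add: z1_def y1_def)
lemma y1_lin: "x \<in> Wn n \<Longrightarrow> y \<in> Wn n \<Longrightarrow> y1 n (radd x y) = radd (y1 n x) (y1 n y)"
  by (simp add: y1_def mk_radd Q1_Wr[where n=n])
lemma y1_empty: "y1 n {} = {}" by (simp add: y1_def)

lemma sum_props: assumes "finite S" "S \<subseteq> Wn n"
  "\<And>p. p \<in> S \<Longrightarrow> Pop p = {} \<and> Pop (exch p) = {} \<and> I4 p"
  shows "sumF (\<lambda>b. b) S \<in> Wn n" "Pop (sumF (\<lambda>b. b) S) = {}" "Pop (exch (sumF (\<lambda>b. b) S)) = {}"
    "I4 (sumF (\<lambda>b. b) S)"
proof -
  show "sumF (\<lambda>b. b) S \<in> Wn n" using assms(2) by (rule sumF_id_W)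
  show "Pop (sumF (\<lambda>b. b) S) = {}"
    by (rule lin_zero[OF assms(1,2)]) (use assms(3) in \<open>simp_all add: Pop_Wr[where n=n]\<close>)
  show "Pop (exch (sumF (\<lambda>b. b) S)) = {}"
    by (rule lin_zero[OF assms(1,2), where L="\<lambda>x. Pop (exch x)"])
       (use assms(3) in \<open>simp_all add: Pop_Wr[where n=n] exch_radd\<close>)
  have "(\<lambda>x. radd x (radd (exch x) (Q1 (exch (Q1 x))))) (sumF (\<lambda>b. b) S) = {}"
    by (rule lin_zero[OF assms(1,2)])
       (use assms(3) in \<open>simp_all add: Q1_Wr[where n=n] exch_radd radd_ac I4_def\<close>)
  then show "I4 (sumF (\<lambda>b. b) S)" unfolding I4_def by (simp add: radd_eq0)
qed

lemma GoodE_Suc: assumes "GoodE t" shows "GoodE (Suc t)"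
proof -
  define n where "n = 2*t"
  have ev: "even n" by (simp add: n_def)
  have nS: "2 * Suc t = Suc (Suc n)" by (simp add: n_def)
  define B where "B = Beven t"
  have finB: "finite B" and PB: "\<forall>p\<in>B. p \<in> Wn n \<and> Pop p = {} \<and> Pop (exch p) = {} \<and> I4 p \<and> exch p \<in> B"
    and indB: "indep B n" and spB: "span B n"
    using assms unfolding GoodE_def B_def n_def by auto
  have BW: "B \<subseteq> Wn n" using PB by auto
  have nz: "{} \<notin> B" using indep_nz[OF indB] .
  define f where "f = z1 n"
  define g where "g = (\<lambda>p. exch (z1 n p))"
  have BS: "Beven (Suc t) = f ` B \<union> g ` B"
    using Beven_Suc'[of t] PB unfolding f_def g_def B_def n_def by auto
  have injf: "inj_on f B" unfolding inj_on_def f_def using z1_inj BW by blast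
  have injg: "inj_on g B" unfolding inj_on_def g_def using z1_inj BW exch_inj by blast
  have dis: "f ` B \<inter> g ` B = {}"
  proof (rule ccontr)
    assume "f ` B \<inter> g ` B \<noteq> {}"
    then obtain p q where pq: "p \<in> B" "q \<in> B" "z1 n p = exch (z1 n q)" unfolding f_def g_def by blast
    then have "p = {}" using z1_dis BW by blast
    then show False using pq nz by simp
  qed
  have sp: "\<And>S. S \<subseteq> B \<Longrightarrow> sumF (\<lambda>b. b) S \<in> Wn n \<and> Pop (sumF (\<lambda>b. b) S) = {} \<and> Pop (exch (sumF (\<lambda>b. b) S)) = {}
     \<and> I4 (sumF (\<lambda>b. b) S)"
  proof -
    fix S assume S: "S \<subseteq> B"
    have "finite S" "S \<subseteq> Wn n" using S finB BW finite_subset by auto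
    then show "sumF (\<lambda>b. b) S \<in> Wn n \<and> Pop (sumF (\<lambda>b. b) S) = {} \<and> Pop (exch (sumF (\<lambda>b. b) S)) = {}
     \<and> I4 (sumF (\<lambda>b. b) S)" using sum_props[of S n] S PB by blast
  qed
  have sf: "\<And>S. S \<subseteq> B \<Longrightarrow> sumF f S = z1 n (sumF (\<lambda>b. b) S)"
    unfolding f_def by (rule sumF_id_lin) (use finB BW in \<open>auto intro: finite_subset simp: z1_lin z1_empty\<close>)
  have sg: "\<And>S. S \<subseteq> B \<Longrightarrow> sumF g S = exch (z1 n (sumF (\<lambda>b. b) S))"
    unfolding g_def by (rule sumF_id_lin) (use finB BW in \<open>auto intro: finite_subset simp: z1_lin z1_empty exch_radd\<close>)
  have el0: "\<forall>x\<in>f ` B \<union> g ` B. x \<in> Wn (Suc (Suc n)) \<and> Pop x = {} \<and> Pop (exch x) = {} \<and> I4 x \<and> exch x \<in> f ` B \<union> g ` B"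
  proof
    fix x assume "x \<in> f ` B \<union> g ` B"
    then obtain p where p: "p \<in> B" "x = f p \<or> x = g p" by blast
    have pp: "p \<in> Wn n" "Pop p = {}" "Pop (exch p) = {}" "I4 p" using PB p by auto
    note iz = inv_z1[OF ev pp]
    have mem: "f p \<in> f ` B \<union> g ` B" "g p \<in> f ` B \<union> g ` B" using p by auto
    have ex: "exch (f p) = g p" "exch (g p) = f p" by (simp_all add: f_def g_def)
    have W2: "f p \<in> Wn (Suc (Suc n))" "g p \<in> Wn (Suc (Suc n))" using pp by (simp_all add: f_def g_def)
    have iz': "Pop (f p) = {}" "Pop (exch (f p)) = {}" "I4 (f p)" "I4 (exch (f p))"
      using iz by (simp_all add: f_def)
    from p(2) show "x \<in> Wn (Suc (Suc n)) \<and> Pop x = {} \<and> Pop (exch x) = {} \<and> I4 x \<and> exch x \<in> f ` B \<union> g ` B"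
    proof
      assume "x = f p" then show ?thesis using iz' mem ex W2 by simp
    next
      assume "x = g p" then show ?thesis using iz' mem ex W2 by simp
    qed
  qed
  then have el: "\<forall>p\<in>Beven (Suc t). p \<in> Wn (2 * Suc t) \<and> Pop p = {} \<and> Pop (exch p) = {} \<and> I4 p \<and> exch p \<in> Beven (Suc t)"
    by (simp only: BS nS)
  have ind: "indep (Beven (Suc t)) (2 * Suc t)" unfolding indep_def
  proof (intro allI impI)
    fix S assume S: "S \<subseteq> Beven (Suc t)" and "\<exists>w\<in>Wn (2 * Suc t). sumF (\<lambda>b. b) S = Pop w"
    then obtain w where w: "w \<in> Wn (Suc (Suc n))" "sumF (\<lambda>b. b) S = Pop w" unfolding nS by blast
    define S1 where "S1 = {p\<in>B. f p \<in> S}"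
    define S2 where "S2 = {p\<in>B. g p \<in> S}"
    have S12: "S1 \<subseteq> B" "S2 \<subseteq> B" unfolding S1_def S2_def by auto
    have Se: "S = f ` S1 \<union> g ` S2" "sumF (\<lambda>b. b) S = radd (sumF f S1) (sumF g S2)"
      using sum_split[OF finB injf injg dis, of S] S unfolding BS S1_def S2_def by auto
    note p1 = sp[OF S12(1)] and p2 = sp[OF S12(2)]
    have eq: "radd (z1 n (sumF (\<lambda>b. b) S1)) (exch (z1 n (sumF (\<lambda>b. b) S2))) = Pop w"
      using Se(2) w(2) sf[OF S12(1)] sg[OF S12(2)] by simp
    obtain w' where w': "w' \<in> Wn n" "sumF (\<lambda>b. b) S2 = Pop w'"
      using even_indep(1)[OF ev _ _ _ _ _ w(1) eq] p1 p2 by blast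
    then have "S2 = {}" using indB S12 unfolding indep_def by blast
    then have eq2: "radd (z1 n (sumF (\<lambda>b. b) S1)) (exch (z1 n (sumF (\<lambda>b. b) {}))) = Pop w"
      using eq by simp
    obtain w'' where w'': "w'' \<in> Wn n" "radd (sumF (\<lambda>b. b) S1) (exch (sumF (\<lambda>b. b) {})) = Pop w''"
      using even_indep(2)[OF ev _ _ _ _ _ w(1) eq2] p1 by (auto simp: z1_empty)
    then have "S1 = {}" using indB S12 unfolding indep_def by auto
    then show "S = {}" using Se(1) \<open>S2 = {}\<close> by simp
  qed
  have spn: "span (Beven (Suc t)) (2 * Suc t)" unfolding span_def nS
  proof (intro ballI impI)
    fix z assume z: "z \<in> Wn (Suc (Suc n))" "Pop z = {}"
    obtain x y where xy: "x \<in> Wn (Suc n)" "y \<in> Wn (Suc n)" "z = mk (Suc n) x y" using mk_decomp z(1) by blast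
    obtain a b where ab: "a \<in> Wn n" "b \<in> Wn n" "x = mk n a b" using mk_decomp xy by blast
    obtain c d where cd: "c \<in> Wn n" "d \<in> Wn n" "y = mk n c d" using mk_decomp xy by blast
    have "mk (Suc n) (mk n (Pop a) (radd (Q1 a) (Pop b)))
     (mk n (radd (Q1 a) (Pop c)) (radd a (radd (Q1 b) (radd (Q1 c) (Pop d))))) = {}"
      using z(2) mk2_Pop[OF ab(1,2) cd(1,2)] xy ab cd by simp
    then have "Pop a = {}" "radd (Q1 a) (Pop b) = {}" "radd (Q1 a) (Pop c) = {}"
        "radd a (radd (Q1 b) (radd (Q1 c) (Pop d))) = {}"
      using ab cd by (simp_all add: mk_eq0)
    then have cz: "Pop a = {}" "Pop b = Q1 a" "Pop c = Q1 a" "a = radd (Q1 b) (radd (Q1 c) (Pop d))"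
        "Pop d = radd a (radd (Q1 b) (Q1 c))"
      unfolding radd_eq0 by (simp_all add: radd_eq_iff radd_ac)
    note lin = Q1_Wr[where n=n] Pop_Wr[where n=n]
    have rc: "Pop (radd c (Q1 d)) = {}" using ab cd cz(3,5)
      by (simp add: lin PQ[where n=n] QQ[where n=n])
    have rW: "radd c (Q1 d) \<in> Wn n" using cd by simp
    obtain S2 w2 where S2: "S2 \<subseteq> B" "w2 \<in> Wn n" "radd c (Q1 d) = radd (sumF (\<lambda>b. b) S2) (Pop w2)"
      using spB[unfolded span_def, rule_format, OF rW rc] by blast
    note p2 = sp[OF S2(1)]
    have sc: "Pop (radd (radd b c) (exch (sumF (\<lambda>b. b) S2))) = {}"
      using ab cd cz(2,3) p2 by (simp add: lin)
    have sW: "radd (radd b c) (exch (sumF (\<lambda>b. b) S2)) \<in> Wn n" using ab cd p2 by simp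
    obtain S1 w1 where S1: "S1 \<subseteq> B" "w1 \<in> Wn n"
        "radd (radd b c) (exch (sumF (\<lambda>b. b) S2)) = radd (sumF (\<lambda>b. b) S1) (Pop w1)"
      using spB[unfolded span_def, rule_format, OF sW sc] by blast
    note p1 = sp[OF S1(1)]
    have h1: "Pop w1 = radd (radd (radd b c) (exch (sumF (\<lambda>b. b) S2))) (sumF (\<lambda>b. b) S1)"
      using radd_solve[OF S1(3)] by simp
    have h2: "Pop w2 = radd (radd c (Q1 d)) (sumF (\<lambda>b. b) S2)"
      using radd_solve[OF S2(3)] by simp
    have rec: "mk (Suc n) (mk n a b) (mk n c d) = radd (radd (z1 n (sumF (\<lambda>b. b) S1)) (exch (z1 n (sumF (\<lambda>b. b) S2))))
     (Pop (mk (Suc n) (mk n (radd (radd d (exch (Q1 (sumF (\<lambda>b. b) S2)))) (Q1 w1)) (radd w1 w2)) (mk n w2 {})))"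
      by (rule even_recon[OF ev ab(1,2) cd(1,2) _ _ S1(2) S2(2) cz(2,3,4) _ _ _ h1 h2])
         (use p1 p2 in auto)
    define S where "S = f ` S1 \<union> g ` S2"
    define w0 where "w0 = mk (Suc n) (mk n (radd (radd d (exch (Q1 (sumF (\<lambda>b. b) S2)))) (Q1 w1)) (radd w1 w2)) (mk n w2 {})"
    have Ssub: "S \<subseteq> Beven (Suc t)" unfolding S_def BS using S1 S2 by auto
    have Ssum: "sumF (\<lambda>b. b) S = radd (z1 n (sumF (\<lambda>b. b) S1)) (exch (z1 n (sumF (\<lambda>b. b) S2)))"
      unfolding S_def using sum_comb[OF finB injf injg dis S1(1) S2(1)] sf[OF S1(1)] sg[OF S2(1)] by simp
    have w0W: "w0 \<in> Wn (Suc (Suc n))" unfolding w0_def using ab cd S1(2) S2(2) p2 by simp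
    have zeq: "z = radd (sumF (\<lambda>b. b) S) (Pop w0)" unfolding Ssum w0_def xy(3) ab(3) cd(3) by (rule rec)
    show "\<exists>S\<subseteq>Beven (Suc t). \<exists>w\<in>Wn (Suc (Suc n)). z = radd (sumF (\<lambda>b. b) S) (Pop w)"
    proof (rule exI[of _ S], rule conjI)
      show "S \<subseteq> Beven (Suc t)" by (rule Ssub)
      show "\<exists>w\<in>Wn (Suc (Suc n)). z = radd (sumF (\<lambda>b. b) S) (Pop w)" by (rule bexI[of _ w0]) (rule zeq, rule w0W)
    qed
  qed
  have "finite (Beven (Suc t))" unfolding BS using finB by simp
  then show ?thesis unfolding GoodE_def using el ind spn by blast
qed

lemma GoodE_all: "GoodE t"
  by (induction t) (simp_all add: GoodE0 GoodE_Suc)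

definition GoodO :: "nat \<Rightarrow> bool" where
  "GoodO t = (finite (Bodd t) \<and> (\<forall>p\<in>Bodd t. p \<in> Wn (Suc (2*t)) \<and> Pop p = {})
     \<and> indep (Bodd t) (Suc (2*t)) \<and> span (Bodd t) (Suc (2*t)))"

lemma GoodO_all: "GoodO t"
proof -
  define n where "n = 2*t"
  have ev: "even n" by (simp add: n_def)
  define B where "B = Beven t"
  have finB: "finite B" and PB: "\<forall>p\<in>B. p \<in> Wn n \<and> Pop p = {} \<and> Pop (exch p) = {} \<and> I4 p \<and> exch p \<in> B"
    and indB: "indep B n" and spB: "span B n"
    using GoodE_all[of t] unfolding GoodE_def B_def n_def by auto
  have BW: "B \<subseteq> Wn n" using PB by auto
  have nz: "{} \<notin> B" using indep_nz[OF indB] .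
  define f where "f = y1 n"
  define g where "g = (\<lambda>p. exch (y1 n p))"
  have BS: "Bodd t = f ` B \<union> g ` B"
    using Bodd'[of t] PB unfolding f_def g_def B_def n_def by auto
  have injf: "inj_on f B" unfolding inj_on_def f_def using y1_inj BW by blast
  have injg: "inj_on g B" unfolding inj_on_def g_def using y1_inj BW exch_inj by blast
  have exchS: "\<And>T. T \<subseteq> B \<Longrightarrow> exch ` T \<subseteq> B" using PB by auto
  have exch_sum: "\<And>T. T \<subseteq> B \<Longrightarrow> sumF (\<lambda>b. b) (exch ` T) = exch (sumF (\<lambda>b. b) T)"
    using sumF_exch_img finB BW finite_subset by (metis subset_trans)
  have sp: "\<And>S. S \<subseteq> B \<Longrightarrow> sumF (\<lambda>b. b) S \<in> Wn n \<and> Pop (sumF (\<lambda>b. b) S) = {} \<and> Pop (exch (sumF (\<lambda>b. b) S)) = {}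
     \<and> I4 (sumF (\<lambda>b. b) S)"
  proof -
    fix S assume S: "S \<subseteq> B"
    have "finite S" "S \<subseteq> Wn n" using S finB BW finite_subset by auto
    then show "sumF (\<lambda>b. b) S \<in> Wn n \<and> Pop (sumF (\<lambda>b. b) S) = {} \<and> Pop (exch (sumF (\<lambda>b. b) S)) = {}
     \<and> I4 (sumF (\<lambda>b. b) S)" using sum_props[of S n] S PB by blast
  qed
  have exch_zero: "\<And>T. T \<subseteq> B \<Longrightarrow> (\<exists>w\<in>Wn n. exch (sumF (\<lambda>b. b) T) = Pop w) \<Longrightarrow> T = {}"
  proof -
    fix T assume T: "T \<subseteq> B" "\<exists>w\<in>Wn n. exch (sumF (\<lambda>b. b) T) = Pop w"
    then have "exch ` T = {}" using indB exchS[OF T(1)] exch_sum[OF T(1)] unfolding indep_def by metis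
    then show "T = {}" by simp
  qed
  have dis: "f ` B \<inter> g ` B = {}"
  proof (rule ccontr)
    assume "f ` B \<inter> g ` B \<noteq> {}"
    then obtain p q where pq: "p \<in> B" "q \<in> B" "y1 n p = exch (y1 n q)" unfolding f_def g_def by blast
    have pp: "p \<in> Wn n" "q \<in> Wn n" "Pop p = {}" "I4 p" using PB pq by auto
    have "radd (y1 n p) (exch (y1 n q)) = Pop {}" using pq by simp
    then obtain w' where "w' \<in> Wn n" "exch p = Pop w'"
      using odd_indep(1)[OF ev pp(1,2,3,4) empty_W] by blast
    then have "exch (sumF (\<lambda>b. b) {p}) = Pop w'" by simp
    then have "{p} = {}" using exch_zero[of "{p}"] pq \<open>w' \<in> Wn n\<close> by blast
    then show False by simp
  qed
  have sf: "\<And>S. S \<subseteq> B \<Longrightarrow> sumF f S = y1 n (sumF (\<lambda>b. b) S)"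
    unfolding f_def by (rule sumF_id_lin) (use finB BW in \<open>auto intro: finite_subset simp: y1_lin y1_empty\<close>)
  have sg: "\<And>S. S \<subseteq> B \<Longrightarrow> sumF g S = exch (y1 n (sumF (\<lambda>b. b) S))"
    unfolding g_def by (rule sumF_id_lin) (use finB BW in \<open>auto intro: finite_subset simp: y1_lin y1_empty exch_radd\<close>)
  have el: "\<forall>x\<in>f ` B \<union> g ` B. x \<in> Wn (Suc n) \<and> Pop x = {}"
  proof
    fix x assume "x \<in> f ` B \<union> g ` B"
    then obtain p where p: "p \<in> B" "x = f p \<or> x = g p" by blast
    have pp: "p \<in> Wn n" "Pop p = {}" "Pop (exch p) = {}" using PB p by auto
    note iy = inv_y1[OF ev pp]
    show "x \<in> Wn (Suc n) \<and> Pop x = {}" using p iy pp(1) unfolding f_def g_def by auto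
  qed
  have ind: "indep (Bodd t) (Suc n)" unfolding indep_def
  proof (intro allI impI)
    fix S assume S: "S \<subseteq> Bodd t" and "\<exists>w\<in>Wn (Suc n). sumF (\<lambda>b. b) S = Pop w"
    then obtain w where w: "w \<in> Wn (Suc n)" "sumF (\<lambda>b. b) S = Pop w" by blast
    define S1 where "S1 = {p\<in>B. f p \<in> S}"
    define S2 where "S2 = {p\<in>B. g p \<in> S}"
    have S12: "S1 \<subseteq> B" "S2 \<subseteq> B" unfolding S1_def S2_def by auto
    have Se: "S = f ` S1 \<union> g ` S2" "sumF (\<lambda>b. b) S = radd (sumF f S1) (sumF g S2)"
      using sum_split[OF finB injf injg dis, of S] S unfolding BS S1_def S2_def by auto
    note p1 = sp[OF S12(1)] and p2 = sp[OF S12(2)]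
    have eq: "radd (y1 n (sumF (\<lambda>b. b) S1)) (exch (y1 n (sumF (\<lambda>b. b) S2))) = Pop w"
      using Se(2) w(2) sf[OF S12(1)] sg[OF S12(2)] by simp
    have "\<exists>w'\<in>Wn n. exch (sumF (\<lambda>b. b) S1) = Pop w'"
      using odd_indep(1)[OF ev _ _ _ _ w(1) eq] p1 p2 by blast
    then have "S1 = {}" using exch_zero[OF S12(1)] by blast
    then have eq2: "radd (y1 n (sumF (\<lambda>b. b) {})) (exch (y1 n (sumF (\<lambda>b. b) S2))) = Pop w"
      using eq by simp
    have "\<exists>w'\<in>Wn n. exch (sumF (\<lambda>b. b) S2) = Pop w'"
      using odd_indep(2)[OF ev _ _ _ _ w(1) eq2] p2 by auto
    then have "S2 = {}" using exch_zero[OF S12(2)] by blast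
    then show "S = {}" using Se(1) \<open>S1 = {}\<close> by simp
  qed
  have spn: "span (Bodd t) (Suc n)" unfolding span_def
  proof (intro ballI impI)
    fix z assume z: "z \<in> Wn (Suc n)" "Pop z = {}"
    obtain a b where ab: "a \<in> Wn n" "b \<in> Wn n" "z = mk n a b" using mk_decomp z(1) by blast
    have "mk n (Pop a) (radd (Q1 a) (Pop b)) = {}" using z(2) ab by (simp add: Pop_mk)
    then have "Pop a = {}" "radd (Q1 a) (Pop b) = {}" using ab by (simp_all add: mk_eq0)
    then have cz: "Pop a = {}" "Pop b = Q1 a" unfolding radd_eq0 by simp_all
    obtain T w1 where T: "T \<subseteq> B" "w1 \<in> Wn n" "a = radd (sumF (\<lambda>b. b) T) (Pop w1)"
      using spB[unfolded span_def, rule_format, OF ab(1) cz(1)] by blast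
    define S2 where "S2 = exch ` T"
    have S2B: "S2 \<subseteq> B" unfolding S2_def using exchS[OF T(1)] .
    have es2: "exch (sumF (\<lambda>b. b) S2) = sumF (\<lambda>b. b) T" unfolding S2_def exch_sum[OF T(1)] by simp
    have rW: "radd b (Qs a) \<in> Wn n" using ab by simp
    have rc: "Pop (radd b (Qs a)) = {}"
      using ab cz PQs[OF ev ab(1)] by (simp add: Pop_Wr[where n=n])
    obtain T' w2 where T': "T' \<subseteq> B" "w2 \<in> Wn n" "radd b (Qs a) = radd (sumF (\<lambda>b. b) T') (Pop w2)"
      using spB[unfolded span_def, rule_format, OF rW rc] by blast
    define S1 where "S1 = exch ` T'"
    have S1B: "S1 \<subseteq> B" unfolding S1_def using exchS[OF T'(1)] .
    have es1: "exch (sumF (\<lambda>b. b) S1) = sumF (\<lambda>b. b) T'" unfolding S1_def exch_sum[OF T'(1)] by simp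
    note p1 = sp[OF S1B] and p2 = sp[OF S2B]
    have h1: "Pop w1 = radd a (exch (sumF (\<lambda>b. b) S2))" unfolding es2 using radd_solve[OF T(3)] .
    have h2: "Pop w2 = radd (radd b (Qs a)) (exch (sumF (\<lambda>b. b) S1))" unfolding es1 using radd_solve[OF T'(3)] .
    define al where "al = radd w1 (Qs (sumF (\<lambda>b. b) S1))"
    define w0 where "w0 = mk n al (radd w2 (Qs al))"
    have rec: "mk n a b = radd (radd (y1 n (sumF (\<lambda>b. b) S1)) (exch (y1 n (sumF (\<lambda>b. b) S2)))) (Pop w0)"
      unfolding w0_def al_def
      by (rule odd_recon[OF ev ab(1,2) _ _ T(2) T'(2) cz _ _ h1 h2]) (use p1 p2 in auto)
    define S where "S = f ` S1 \<union> g ` S2"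
    have Ssub: "S \<subseteq> Bodd t" unfolding S_def BS using S1B S2B by auto
    have Ssum: "sumF (\<lambda>b. b) S = radd (y1 n (sumF (\<lambda>b. b) S1)) (exch (y1 n (sumF (\<lambda>b. b) S2)))"
      unfolding S_def using sum_comb[OF finB injf injg dis S1B S2B] sf[OF S1B] sg[OF S2B] by simp
    have w0W: "w0 \<in> Wn (Suc n)" unfolding w0_def al_def using T(2) T'(2) p1 by simp
    have zeq: "z = radd (sumF (\<lambda>b. b) S) (Pop w0)" unfolding Ssum ab(3) by (rule rec)
    show "\<exists>S\<subseteq>Bodd t. \<exists>w\<in>Wn (Suc n). z = radd (sumF (\<lambda>b. b) S) (Pop w)"
    proof (rule exI[of _ S], rule conjI)
      show "S \<subseteq> Bodd t" by (rule Ssub)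
      show "\<exists>w\<in>Wn (Suc n). z = radd (sumF (\<lambda>b. b) S) (Pop w)" by (rule bexI[of _ w0]) (rule zeq, rule w0W)
    qed
  qed
  have "finite (Bodd t)" unfolding BS using finB by simp
  then show ?thesis unfolding GoodO_def n_def[symmetric] using el ind spn BS by simp
qed



lemma Bn_good: "finite (Bn n) \<and> (\<forall>b\<in>Bn n. b \<in> Wn n \<and> Pop b = {}) \<and> indep (Bn n) n \<and> span (Bn n) n"
proof (cases "even n")
  case True
  then have e: "2 * (n div 2) = n" by simp
  show ?thesis using GoodE_all[of "n div 2"] True unfolding Bn_def GoodE_def e by simp
next
  case False
  then have e: "Suc (2 * (n div 2)) = n" by presburger
  show ?thesis using GoodO_all[of "n div 2"] False unfolding Bn_def GoodO_def e by simp
qed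

locale relab =
  fixes \<phi> :: "nat \<Rightarrow> nat" and n :: nat
  assumes inj: "inj_on \<phi> {1..n}"
begin

definition h :: "mono \<Rightarrow> mono" where "h m = (\<phi> ` fst m, \<phi> ` snd m)"
definition D :: "mono set" where "D = {m. fst m \<subseteq> {1..n} \<and> snd m \<subseteq> {1..n}}"

lemma img_inj: "A \<subseteq> {1..n} \<Longrightarrow> B \<subseteq> {1..n} \<Longrightarrow> \<phi> ` A = \<phi> ` B \<Longrightarrow> A = B"
  using inj by (metis inj_on_image_eq_iff)

lemma h_inj: "inj_on h D"
proof (rule inj_onI)
  fix x y assume xy: "x \<in> D" "y \<in> D" "h x = h y"
  then have "\<phi> ` fst x = \<phi> ` fst y" "\<phi> ` snd x = \<phi> ` snd y" by (simp_all add: h_def)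
  moreover have "fst x \<subseteq> {1..n}" "fst y \<subseteq> {1..n}" "snd x \<subseteq> {1..n}" "snd y \<subseteq> {1..n}"
    using xy(1,2) unfolding D_def by auto
  ultimately have "fst x = fst y" "snd x = snd y" using img_inj by simp_all
  then show "x = y" by (simp add: prod_eq_iff)
qed

lemma Mn_D: "Mn n \<subseteq> D"
proof
  fix m assume "m \<in> Mn n"
  then have "fst m \<subseteq> {1..n}" "snd m = {1..n} - fst m" by (simp_all add: Mn_mem)
  then show "m \<in> D" unfolding D_def by blast
qed

lemma relabel_eq: "relabel \<phi> a = h ` a"
  unfolding relabel_def h_def by (rule image_cong) (auto split: prod.splits)

lemma img_Int: "A \<subseteq> {1..n} \<Longrightarrow> B \<subseteq> {1..n} \<Longrightarrow> \<phi> ` A \<inter> \<phi> ` B = \<phi> ` (A \<inter> B)"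
  using inj by (simp add: inj_on_image_Int)
lemma img_Diff: "A \<subseteq> {1..n} \<Longrightarrow> B \<subseteq> {1..n} \<Longrightarrow> \<phi> ` A - \<phi> ` B = \<phi> ` (A - B)"
  by (rule inj_on_image_set_diff[OF inj, symmetric]) auto

lemma Pm_h: assumes "m \<in> Mn n" shows "Pm (h m) = h ` Pm m"
proof -
  obtain I K0 where m: "m = (I, K0)" by (cases m)
  have IK: "I \<subseteq> {1..n}" "K0 \<subseteq> {1..n}" using assms m by (auto simp: Mn_mem)
  have injK: "inj_on (\<lambda>K. \<phi> ` K) {K. K \<subseteq> K0 \<and> card K = 2}"
  proof (rule inj_onI)
    fix A B assume "A \<in> {K. K \<subseteq> K0 \<and> card K = 2}" "B \<in> {K. K \<subseteq> K0 \<and> card K = 2}" "\<phi> ` A = \<phi> ` B"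
    moreover then have "A \<subseteq> {1..n}" "B \<subseteq> {1..n}" using IK by auto
    ultimately show "A = B" using img_inj by simp
  qed
  have cardK: "\<And>K. K \<subseteq> K0 \<Longrightarrow> card (\<phi> ` K) = card K"
  proof -
    fix K assume "K \<subseteq> K0"
    then have "inj_on \<phi> K" using IK by (intro inj_on_subset[OF inj]) auto
    then show "card (\<phi> ` K) = card K" by (rule card_image)
  qed
  have idx: "{K. K \<subseteq> \<phi> ` K0 \<and> card K = 2} = (\<lambda>K. \<phi> ` K) ` {K. K \<subseteq> K0 \<and> card K = 2}"
  proof (rule set_eqI, rule iffI)
    fix K assume "K \<in> {K. K \<subseteq> \<phi> ` K0 \<and> card K = 2}"
    then have K: "K \<subseteq> \<phi> ` K0" "card K = 2" by auto
    define K' where "K' = {x \<in> K0. \<phi> x \<in> K}"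
    have "K = \<phi> ` K'" unfolding K'_def using K(1) by auto
    moreover have "K' \<subseteq> K0" unfolding K'_def by auto
    ultimately show "K \<in> (\<lambda>K. \<phi> ` K) ` {K. K \<subseteq> K0 \<and> card K = 2}" using K(2) cardK by auto
  next
    fix K assume "K \<in> (\<lambda>K. \<phi> ` K) ` {K. K \<subseteq> K0 \<and> card K = 2}"
    then show "K \<in> {K. K \<subseteq> \<phi> ` K0 \<and> card K = 2}" using cardK by auto
  qed
  have "Pm (h m) = sumF (\<lambda>K. mmul (K, {}) (\<phi> ` I, \<phi> ` K0 - K)) {K. K \<subseteq> \<phi> ` K0 \<and> card K = 2}"
    by (simp add: Pm_def h_def m)
  also have "\<dots> = sumF (\<lambda>K. mmul (\<phi> ` K, {}) (\<phi> ` I, \<phi> ` K0 - \<phi> ` K)) {K. K \<subseteq> K0 \<and> card K = 2}"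
    unfolding idx by (rule sumF_image[OF injK])
  also have "\<dots> = sumF (\<lambda>K. h ` mmul (K, {}) (I, K0 - K)) {K. K \<subseteq> K0 \<and> card K = 2}"
  proof (rule sumF_cong)
    fix K assume "K \<in> {K. K \<subseteq> K0 \<and> card K = 2}"
    then have K: "K \<subseteq> {1..n}" using IK by auto
    have "\<phi> ` K \<inter> \<phi> ` I = {} \<longleftrightarrow> K \<inter> I = {}" using img_Int[OF K IK(1)] by auto
    moreover have "\<phi> ` K0 - \<phi> ` K = \<phi> ` (K0 - K)" using img_Diff[OF IK(2) K] .
    ultimately show "mmul (\<phi> ` K, {}) (\<phi> ` I, \<phi> ` K0 - \<phi> ` K) = h ` mmul (K, {}) (I, K0 - K)"
      by (simp add: mmul_K h_def image_Un)
  qed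
  also have "\<dots> = h ` Pm m" unfolding Pm_def m
    by (simp, rule sumF_img[OF _ h_inj]) (use IK in \<open>auto simp: mmul_K D_def split: if_splits\<close>)
  finally show ?thesis .
qed

lemma Pop_relabel: assumes "a \<in> Wn n" shows "Pop (relabel \<phi> a) = relabel \<phi> (Pop a)"
proof -
  have aD: "a \<subseteq> D" using assms Mn_D by (auto simp: Wn_iff)
  have "Pop (h ` a) = sumF (\<lambda>m. Pm (h m)) a"
    unfolding Pop_def by (rule sumF_image) (rule inj_on_subset[OF h_inj aD])
  also have "\<dots> = sumF (\<lambda>m. h ` Pm m) a"
    by (rule sumF_cong) (use assms Pm_h in \<open>auto simp: Wn_iff\<close>)
  also have "\<dots> = h ` Pop a" unfolding Pop_def
  proof (rule sumF_img[OF _ h_inj])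
    fix m assume "m \<in> a"
    then have "m \<in> Mn n" using assms by (auto simp: Wn_iff)
    then show "Pm m \<subseteq> D" using Pm_Mn Mn_D by blast
  qed
  finally show ?thesis by (simp add: relabel_eq)
qed

lemma relabel_radd: "a \<in> Wn n \<Longrightarrow> b \<in> Wn n \<Longrightarrow> relabel \<phi> (radd a b) = radd (relabel \<phi> a) (relabel \<phi> b)"
  unfolding relabel_eq by (rule image_radd, rule inj_on_subset[OF h_inj]) (use Mn_D in \<open>auto simp: Wn_iff\<close>)

lemma relabel_inj: assumes "a \<in> Wn n" "b \<in> Wn n" "relabel \<phi> a = relabel \<phi> b" shows "a = b"
proof -
  have "a \<subseteq> D" "b \<subseteq> D" using assms Mn_D by (auto simp: Wn_iff)
  then show ?thesis using assms(3) inj_on_image_eq_iff[OF h_inj] unfolding relabel_eq by blast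
qed

lemma relabel_empty: "relabel \<phi> {} = {}" by (simp add: relabel_def)

lemma relabel_sum: assumes "finite S" "S \<subseteq> Wn n"
  shows "sumF (\<lambda>b. b) (relabel \<phi> ` S) = relabel \<phi> (sumF (\<lambda>b. b) S)"
proof -
  have "sumF (\<lambda>b. b) (relabel \<phi> ` S) = sumF (relabel \<phi>) S"
  proof (subst sumF_image)
    show "inj_on (relabel \<phi>) S" using assms(2) relabel_inj by (meson inj_onI subsetD)
  qed simp
  also have "\<dots> = relabel \<phi> (sumF (\<lambda>b. b) S)"
    by (rule sumF_id_lin[OF assms]) (simp_all add: relabel_empty relabel_radd)
  finally show ?thesis .
qed

end



lemma phi_props: assumes "finite J"
  shows "inj_on (phi J) {1..card J}" "phi J ` {1..card J} = J"
proof -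
  define xs where "xs = sorted_list_of_set J"
  have d: "distinct xs" "set xs = J" "length xs = card J" using assms unfolding xs_def by auto
  have p: "\<And>i. phi J i = xs ! (i - 1)" unfolding phi_def xs_def by simp
  show "inj_on (phi J) {1..card J}"
  proof (rule inj_onI)
    fix i j assume ij: "i \<in> {1..card J}" "j \<in> {1..card J}" "phi J i = phi J j"
    then have "xs ! (i - 1) = xs ! (j - 1)" "i - 1 < length xs" "j - 1 < length xs" using p d by auto
    then have "i - 1 = j - 1" using d(1) nth_eq_iff_index_eq by blast
    then show "i = j" using ij by auto
  qed
  show "phi J ` {1..card J} = J"
  proof
    show "phi J ` {1..card J} \<subseteq> J" using p d by (auto intro!: nth_mem)
    show "J \<subseteq> phi J ` {1..card J}"
    proof
      fix x assume "x \<in> J"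
      then obtain k where k: "k < length xs" "xs ! k = x" using d by (auto simp: in_set_conv_nth)
      then have "phi J (Suc k) = x" "Suc k \<in> {1..card J}" using p d by auto
      then show "x \<in> phi J ` {1..card J}" by (metis image_eqI)
    qed
  qed
qed

lemma relabel_W: assumes "finite J"
  shows "relabel (phi J) ` Wn (card J) = WJ J"
proof -
  define n where "n = card J"
  define f where "f = phi J"
  have inj: "inj_on f {1..n}" and im: "f ` {1..n} = J" using phi_props[OF assms] unfolding f_def n_def by auto
  have mon: "\<And>I0. I0 \<subseteq> {1..n} \<Longrightarrow> (f ` I0, f ` ({1..n} - I0)) = (f ` I0, J - f ` I0)"
    using inj im by (simp add: inj_on_image_set_diff)
  show ?thesis unfolding n_def[symmetric] f_def[symmetric]
  proof
    show "relabel f ` Wn n \<subseteq> WJ J"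
    proof
      fix z assume "z \<in> relabel f ` Wn n"
      then obtain a where a: "a \<in> Wn n" "z = relabel f a" by blast
      show "z \<in> WJ J" unfolding WJ_def
      proof (clarify)
        fix x y assume "(x, y) \<in> z"
        then obtain I0 K0 where m: "(I0, K0) \<in> a" "x = f ` I0" "y = f ` K0" using a unfolding relabel_def by auto
        then have "I0 \<subseteq> {1..n}" "K0 = {1..n} - I0" using a(1) by (auto simp: Wn_iff Mn_def)
        then have "(x, y) = (f ` I0, J - f ` I0)" "f ` I0 \<subseteq> J" using mon m im by auto
        then show "\<exists>I. (x, y) = (I, J - I) \<and> I \<subseteq> J" by blast
      qed
    qed
    show "WJ J \<subseteq> relabel f ` Wn n"
    proof
      fix z assume z: "z \<in> WJ J"
      define a where "a = {(I0, {1..n} - I0) | I0. I0 \<subseteq> {1..n} \<and> (f ` I0, J - f ` I0) \<in> z}"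
      have aW: "a \<in> Wn n" unfolding a_def Wn_iff Mn_def by blast
      have "relabel f a = z"
      proof
        show "relabel f a \<subseteq> z" unfolding relabel_def a_def using mon by auto
        show "z \<subseteq> relabel f a"
        proof
          fix m assume "m \<in> z"
          then obtain I where I: "m = (I, J - I)" "I \<subseteq> J" using z unfolding WJ_def by blast
          define I0 where "I0 = {i \<in> {1..n}. f i \<in> I}"
          have "f ` I0 = I" unfolding I0_def using I(2) im by auto
          moreover have "I0 \<subseteq> {1..n}" unfolding I0_def by auto
          ultimately have "(I0, {1..n} - I0) \<in> a" "m = (f ` I0, f ` ({1..n} - I0))"
            unfolding a_def using \<open>m \<in> z\<close> I mon by auto
          then show "m \<in> relabel f a" unfolding relabel_def by force
        qed
      qed
      then show "z \<in> relabel f ` Wn n" using aW by blast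
    qed
  qed
qed

theorem mainTheorem12:
  fixes J :: "nat set"
  assumes "finite J" and "0 \<notin> J"
  shows "(\<forall>b \<in> BJ J. b \<in> WJ J \<and> Pop b = {})
       \<and> (\<forall>S \<subseteq> BJ J. (\<exists>w \<in> WJ J. sumF (\<lambda>b. b) S = Pop w) \<longrightarrow> S = {})
       \<and> (\<forall>z \<in> WJ J. Pop z = {} \<longrightarrow>
            (\<exists>S \<subseteq> BJ J. \<exists>w \<in> WJ J. z = radd (sumF (\<lambda>b. b) S) (Pop w)))"
proof -
  define n where "n = card J"
  define R where "R = relabel (phi J)"
  interpret relab "phi J" n using phi_props(1)[OF assms(1)] unfolding n_def by unfold_locales
  have RW: "R ` Wn n = WJ J" unfolding R_def n_def using relabel_W[OF assms(1)] .
  have BJe: "BJ J = R ` Bn n" unfolding BJ_def R_def n_def ..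
  have good: "finite (Bn n)" "\<forall>b\<in>Bn n. b \<in> Wn n \<and> Pop b = {}" "indep (Bn n) n" "span (Bn n) n"
    using Bn_good[of n] by auto
  have BW: "Bn n \<subseteq> Wn n" using good(2) by auto
  have RP: "\<And>a. a \<in> Wn n \<Longrightarrow> Pop (R a) = R (Pop a)" unfolding R_def by (rule Pop_relabel)
  have Re: "R {} = {}" unfolding R_def by (rule relabel_empty)
  have Rinj: "\<And>a b. a \<in> Wn n \<Longrightarrow> b \<in> Wn n \<Longrightarrow> R a = R b \<Longrightarrow> a = b" unfolding R_def by (rule relabel_inj)
  have Rsum: "\<And>S. S \<subseteq> Bn n \<Longrightarrow> sumF (\<lambda>b. b) (R ` S) = R (sumF (\<lambda>b. b) S)"
    unfolding R_def using good(1) BW by (intro relabel_sum) (auto intro: finite_subset)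
  have Rradd: "\<And>a b. a \<in> Wn n \<Longrightarrow> b \<in> Wn n \<Longrightarrow> R (radd a b) = radd (R a) (R b)"
    unfolding R_def by (rule relabel_radd)
  have p1: "\<forall>b \<in> BJ J. b \<in> WJ J \<and> Pop b = {}"
  proof
    fix b assume "b \<in> BJ J"
    then obtain b0 where b0: "b0 \<in> Bn n" "b = R b0" unfolding BJe by blast
    then have "b0 \<in> Wn n" "Pop b0 = {}" using good(2) by auto
    then show "b \<in> WJ J \<and> Pop b = {}" using b0 RW RP Re by auto
  qed
  have p2: "\<forall>S \<subseteq> BJ J. (\<exists>w \<in> WJ J. sumF (\<lambda>b. b) S = Pop w) \<longrightarrow> S = {}"
  proof (intro allI impI)
    fix S assume S: "S \<subseteq> BJ J" and "\<exists>w \<in> WJ J. sumF (\<lambda>b. b) S = Pop w"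
    then obtain w where w: "w \<in> WJ J" "sumF (\<lambda>b. b) S = Pop w" by blast
    obtain w0 where w0: "w0 \<in> Wn n" "w = R w0" using w(1) RW by blast
    define S0 where "S0 = {b \<in> Bn n. R b \<in> S}"
    have S0: "S0 \<subseteq> Bn n" "S = R ` S0" using S unfolding S0_def BJe by auto
    have "R (sumF (\<lambda>b. b) S0) = R (Pop w0)" using w(2) w0 RP Rsum[OF S0(1)] S0(2) by simp
    moreover have "sumF (\<lambda>b. b) S0 \<in> Wn n" using S0(1) BW by (intro sumF_id_W) auto
    ultimately have "sumF (\<lambda>b. b) S0 = Pop w0" using Rinj w0 by simp
    then have "S0 = {}" using good(3) S0(1) w0(1) unfolding indep_def by blast
    then show "S = {}" using S0 by simp
  qed
  have p3: "\<forall>z \<in> WJ J. Pop z = {} \<longrightarrow> (\<exists>S \<subseteq> BJ J. \<exists>w \<in> WJ J. z = radd (sumF (\<lambda>b. b) S) (Pop w))"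
  proof (intro ballI impI)
    fix z assume z: "z \<in> WJ J" "Pop z = {}"
    obtain z0 where z0: "z0 \<in> Wn n" "z = R z0" using z(1) RW by blast
    have "R (Pop z0) = R {}" using z(2) z0 RP Re by simp
    then have "Pop z0 = {}" using Rinj z0 by simp
    then obtain S0 w0 where S0: "S0 \<subseteq> Bn n" "w0 \<in> Wn n" "z0 = radd (sumF (\<lambda>b. b) S0) (Pop w0)"
      using good(4) z0(1) unfolding span_def by blast
    have sW: "sumF (\<lambda>b. b) S0 \<in> Wn n" using S0(1) BW by (intro sumF_id_W) auto
    have "z = radd (sumF (\<lambda>b. b) (R ` S0)) (Pop (R w0))"
      using z0 S0 Rradd[OF sW] Rsum[OF S0(1)] RP by simp
    moreover have "R ` S0 \<subseteq> BJ J" unfolding BJe using S0 by auto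
    moreover have "R w0 \<in> WJ J" using S0(2) RW by blast
    ultimately show "\<exists>S \<subseteq> BJ J. \<exists>w \<in> WJ J. z = radd (sumF (\<lambda>b. b) S) (Pop w)" by blast
  qed
  show ?thesis using p1 p2 p3 by blast
qed


end
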